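(* Let $F$ and $G$ be experiments on the state space $\Theta=\{\theta_0,\ldots,\theta_n\}$. The following are equivalent: (i) $F\succeq_{\textup{LB}}G$; (ii) $\overline{V}_F(\boldsymbol{q})\ge\overline{V}_G(\boldsymbol{q})$ for every binary-action decision problem $\{\mathcal{A},u\}$ and every $\boldsymbol{q}\in\widehat{\Delta}_n$; (iii) for every binary-action decision problem $\{\mathcal{A},u\}$ and every strategy $\sigma_G$ under $G$, there exists a strategy $\sigma_F$ under $F$ with $u(\sigma_F,\theta)\ge u(\sigma_G,\theta)$ for each $\theta\in\Theta$.
   Context: States: $\Theta=\{\theta_0,\ldots,\theta_n\}\subset\mathbb{R}$. An experiment $F$ specifies, for each $\theta$, an absolutely continuous distribution $F(\cdot\mid\theta)$ with density $f(\cdot\mid\theta)$ of a signal in a compact interval $\mathcal{X}$; likewise $G$ with densities $g(\cdot\mid\theta)$ on a compact interval $\mathcal{Y}$. $\widehat{\Delta}_n=\{\boldsymbol{q}\in[0,1]^n:\sum_iq_i\le1\}$; a belief $\boldsymbol{p}\in\widehat{\Delta}_n$ puts mass $p_i$ on $\theta_i$ ($i\ge1$) and $p_0=1-\sum_ip_i$ on $\theta_0$. Posterior $p_{F,i}(x;\boldsymbol{q})=q_if(x\mid\theta_i)/\sum_jq_jf(x\mid\theta_j)$; $\boldsymbol{p}_F(\boldsymbol{q})=(p_{F,1},\ldots,p_{F,n})(X;\boldsymbol{q})$ with $X\sim\sum_jq_jF(\cdot\mid\theta_j)$ (analogously for $G$). $F\succeq_{\textup{LB}}G$ means: for every $\boldsymbol{q}\in\widehat{\Delta}_n$,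 every $\boldsymbol{b}\in\mathbb{R}^n$ and every convex $C:\mathbb{R}\to\mathbb{R}$, $\mathbb{E}[C(\boldsymbol{b}\cdot\boldsymbol{p}_F(\boldsymbol{q}))]\ge\mathbb{E}[C(\boldsymbol{b}\cdot\boldsymbol{p}_G(\boldsymbol{q}))]$. A decision problem $\{\mathcal{A},u\}$ consists of a compact set $\mathcal{A}\subseteq\mathbb{R}^k$ and $u:\mathcal{A}\times\Theta\to\mathbb{R}$ continuous in $a$ for each $\theta$; it is binary-action if $\mathcal{A}=\{a_0,a_1\}$. Let $u(a,\boldsymbol{p})=\sum_{i=0}^np_iu(a,\theta_i)$, $V(\boldsymbol{p})=\max_{a\in\mathcal{A}}u(a,\boldsymbol{p})$ and $\overline{V}_F(\boldsymbol{q})=\mathbb{E}[V(\boldsymbol{p}_F(\boldsymbol{q}))]$. A strategy under $F$ is a measurable map $\sigma_F:\mathcal{X}\to\Delta(\mathcal{A})$, with statewise payoff $u(\sigma_F,\theta)=\int_{\mathcal{X}}\int_{\mathcal{A}}u(a,\theta)\,\sigma_F(x)(da)\,dF(x\mid\theta)$; analogously for $G$. *)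

theory Defs
  imports "HOL-Analysis.Analysis"
begin

text \<open>States theta_0..theta_n are represented by their indices 0..n.
  An experiment on the signal interval X is a family of densities f i (i = 0..n)
  on the compact interval X.\<close>

definition is_experiment :: "nat \<Rightarrow> real set \<Rightarrow> (nat \<Rightarrow> real \<Rightarrow> real) \<Rightarrow> bool" where
  "is_experiment n X f \<longleftrightarrow>
     (\<exists>a b. a \<le> b \<and> X = {a..b}) \<and>
     (\<forall>i\<le>n. (\<forall>x\<in>X. 0 \<le> f i x) \<and> integrable (lebesgue_on X) (f i) \<and>
              (LINT x|lebesgue_on X. f i x) = 1)"

text \<open>The reduced simplex: q i for i = 1..n, with implicit q_0 = 1 - sum.\<close>
definition hat_simplex :: "nat \<Rightarrow> (nat \<Rightarrow> real) set" where
  "hat_simplex n = {q. (\<forall>i\<in>{1..n}. 0 \<le> q i \<and> q i \<le> 1) \<and> (\<Sum>i=1..n. q i) \<le> 1}"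

definition full_prior :: "nat \<Rightarrow> (nat \<Rightarrow> real) \<Rightarrow> nat \<Rightarrow> real" where
  "full_prior n q i = (if i = 0 then 1 - (\<Sum>j=1..n. q j) else q i)"

definition mix :: "nat \<Rightarrow> (nat \<Rightarrow> real \<Rightarrow> real) \<Rightarrow> (nat \<Rightarrow> real) \<Rightarrow> real \<Rightarrow> real" where
  "mix n f q x = (\<Sum>j=0..n. full_prior n q j * f j x)"

definition posterior :: "nat \<Rightarrow> (nat \<Rightarrow> real \<Rightarrow> real) \<Rightarrow> (nat \<Rightarrow> real) \<Rightarrow> nat \<Rightarrow> real \<Rightarrow> real" where
  "posterior n f q i x = full_prior n q i * f i x / mix n f q x"

text \<open>E[h(p_F(q))] where p_F(q) = (p_{F,1},...,p_{F,n})(X;q) and X has density mix.\<close>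
definition expect_post :: "nat \<Rightarrow> real set \<Rightarrow> (nat \<Rightarrow> real \<Rightarrow> real) \<Rightarrow> (nat \<Rightarrow> real)
    \<Rightarrow> ((nat \<Rightarrow> real) \<Rightarrow> real) \<Rightarrow> real" where
  "expect_post n X f q h = (LINT x|lebesgue_on X. h (\<lambda>i. posterior n f q i x) * mix n f q x)"

definition lb_dominates :: "nat \<Rightarrow> real set \<Rightarrow> (nat \<Rightarrow> real \<Rightarrow> real) \<Rightarrow> real set \<Rightarrow> (nat \<Rightarrow> real \<Rightarrow> real) \<Rightarrow> bool" where
  "lb_dominates n X f Y g \<longleftrightarrow>
     (\<forall>q\<in>hat_simplex n. \<forall>b :: nat \<Rightarrow> real. \<forall>C :: real \<Rightarrow> real. convex_on UNIV C \<longrightarrow>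
        expect_post n X f q (\<lambda>p. C (\<Sum>i=1..n. b i * p i))
          \<ge> expect_post n Y g q (\<lambda>p. C (\<Sum>i=1..n. b i * p i)))"

text \<open>Binary-action decision problems: actions a_0 (False) and a_1 (True), u a i = u(a, theta_i).
  Expected utility at belief p (p_0 = 1 - sum_{i>=1} p_i).\<close>
definition util_belief :: "nat \<Rightarrow> (bool \<Rightarrow> nat \<Rightarrow> real) \<Rightarrow> bool \<Rightarrow> (nat \<Rightarrow> real) \<Rightarrow> real" where
  "util_belief n u a p = (1 - (\<Sum>i=1..n. p i)) * u a 0 + (\<Sum>i=1..n. p i * u a i)"

definition value_fn :: "nat \<Rightarrow> (bool \<Rightarrow> nat \<Rightarrow> real) \<Rightarrow> (nat \<Rightarrow> real) \<Rightarrow> real" where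
  "value_fn n u p = max (util_belief n u False p) (util_belief n u True p)"

definition Vbar :: "nat \<Rightarrow> real set \<Rightarrow> (nat \<Rightarrow> real \<Rightarrow> real) \<Rightarrow> (bool \<Rightarrow> nat \<Rightarrow> real) \<Rightarrow> (nat \<Rightarrow> real) \<Rightarrow> real" where
  "Vbar n X f u q = expect_post n X f q (value_fn n u)"

text \<open>A (mixed) strategy for a binary action set: a measurable map s giving the probability
  of playing a_1 (True) after each signal; a_0 is played with probability 1 - s.\<close>
definition is_strategy :: "real set \<Rightarrow> (real \<Rightarrow> real) \<Rightarrow> bool" where
  "is_strategy X s \<longleftrightarrow> s \<in> borel_measurable borel \<and> (\<forall>x\<in>X. 0 \<le> s x \<and> s x \<le> 1)"

definition strat_payoff :: "real set \<Rightarrow> (nat \<Rightarrow> real \<Rightarrow> real) \<Rightarrow> (bool \<Rightarrow> nat \<Rightarrow> real) \<Rightarrow> (real \<Rightarrow> real) \<Rightarrow> nat \<Rightarrow> real" where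
  "strat_payoff X f u s i = (LINT x|lebesgue_on X. (s x * u True i + (1 - s x) * u False i) * f i x)"

end

theory Submission
  imports Defs
begin

lemma telescope_pl:
  fixes C zz s :: "nat \<Rightarrow> real" and h z :: real
  assumes zs: "\<And>k. zz (Suc k) = zz k + h" and sh: "\<And>k. s k * h = C (Suc k) - C k"
  shows "C 0 + s 0 * (z - zz 0) + (\<Sum>k<j. (s (Suc k) - s k) * (z - zz (Suc k)))
         = C j + s j * (z - zz j)"
proof (induction j)
  case 0 then show ?case by simp
next
  case (Suc j)
  have "C 0 + s 0 * (z - zz 0) + (\<Sum>k<Suc j. (s (Suc k) - s k) * (z - zz (Suc k)))
      = C j + s j * (z - zz j) + (s (Suc j) - s j) * (z - zz (Suc j))"
    using Suc by simp
  also have "\<dots> = C j + s j * h + s (Suc j) * (z - zz (Suc j))"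
    unfolding zs by (simp add: algebra_simps)
  also have "\<dots> = C (Suc j) + s (Suc j) * (z - zz (Suc j))"
    unfolding sh by simp
  finally show ?case .
qed

lemma convex_approx:
  fixes C :: "real \<Rightarrow> real"
  assumes cv: "convex_on UNIV C" and e: "0 < \<epsilon>" and lohi: "lo < hi"
  shows "\<exists>\<alpha> \<beta> (N::nat) zs cs. (\<forall>k. 0 \<le> cs k) \<and>
     (\<forall>z\<in>{lo..hi}. \<bar>C z - (\<alpha> + \<beta> * z + (\<Sum>k<N. cs k * max 0 (z - zs k)))\<bar> \<le> \<epsilon>)"
proof -
  have "continuous_on UNIV C" by (rule convex_on_continuous[OF open_UNIV cv])
  then have "continuous_on {lo..hi} C" by (rule continuous_on_subset) simp
  then have "uniformly_continuous_on {lo..hi} C"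
    by (rule compact_uniformly_continuous) simp
  then obtain d where d: "0 < d" and dC: "\<And>x x'. x \<in> {lo..hi} \<Longrightarrow> x' \<in> {lo..hi} \<Longrightarrow> dist x' x < d \<Longrightarrow> dist (C x') (C x) < \<epsilon>"
    unfolding uniformly_continuous_on_def using e by metis
  obtain N :: nat where N: "(hi - lo) / d < real N" using reals_Archimedean2 by blast
  have "0 < (hi - lo) / d" using lohi d by simp
  then have Npos: "0 < N" using N by (cases N) auto
  define h where "h = (hi - lo) / real N"
  have h: "0 < h" unfolding h_def using Npos lohi by simp
  have hd: "h < d" unfolding h_def using N Npos d by (simp add: field_simps)
  define zz where "zz = (\<lambda>k::nat. lo + real k * h)"
  define s where "s = (\<lambda>k. (C (zz (Suc k)) - C (zz k)) / h)"
  have zN: "zz N = hi" unfolding zz_def h_def using Npos by simp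
  have zmono: "zz k \<le> zz k'" if "k \<le> k'" for k k' unfolding zz_def using that h
    by (simp add: mult_right_mono)
  have zin: "zz k \<in> {lo..hi}" if "k \<le> N" for k
    using zmono[OF that] zmono[of 0 k] zN by (simp add: zz_def)
  have smono: "s k \<le> s (Suc k)" for k
  proof -
    have mid: "zz (Suc k) = (1 - 1/2) *\<^sub>R zz k + (1/2) *\<^sub>R zz (Suc (Suc k))"
      unfolding zz_def by (simp add: algebra_simps)
    have "C (zz (Suc k)) \<le> (1 - 1/2) * C (zz k) + (1/2) * C (zz (Suc (Suc k)))"
      unfolding mid by (rule convex_onD[OF cv]) auto
    then have "C (zz (Suc k)) - C (zz k) \<le> C (zz (Suc (Suc k))) - C (zz (Suc k))" by simp
    then show ?thesis unfolding s_def using h by (simp add: divide_right_mono)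
  qed
  define \<alpha> where "\<alpha> = C (zz 0) - s 0 * zz 0"
  define \<beta> where "\<beta> = s 0"
  define cs where "cs = (\<lambda>k. s (Suc k) - s k)"
  define zs where "zs = (\<lambda>k. zz (Suc k))"
  have csnn: "\<forall>k. 0 \<le> cs k" unfolding cs_def using smono by simp
  have approx: "\<bar>C z - (\<alpha> + \<beta> * z + (\<Sum>k<N - 1. cs k * max 0 (z - zs k)))\<bar> \<le> \<epsilon>"
    if z: "z \<in> {lo..hi}" for z
  proof -
    define j where "j = min (N - 1) (nat \<lfloor>(z - lo) / h\<rfloor>)"
    have jN: "j \<le> N - 1" unfolding j_def by simp
    have fl0: "0 \<le> (z - lo) / h" using z h by simp
    have zj: "zz j \<le> z"
    proof -
      have "real j \<le> real (nat \<lfloor>(z - lo) / h\<rfloor>)" unfolding j_def by simp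
      also have "\<dots> \<le> (z - lo) / h" using fl0 by simp
      finally have "real j * h \<le> z - lo" using h by (simp add: field_simps)
      then show ?thesis unfolding zz_def by simp
    qed
    have zj1: "z \<le> zz (Suc j)"
    proof (cases "nat \<lfloor>(z - lo) / h\<rfloor> \<le> N - 1")
      case True
      then have "j = nat \<lfloor>(z - lo) / h\<rfloor>" unfolding j_def by simp
      moreover have "0 \<le> \<lfloor>(z - lo) / h\<rfloor>" using fl0 by simp
      ultimately have "real j = of_int \<lfloor>(z - lo) / h\<rfloor>" by simp
      moreover have "(z - lo) / h < of_int \<lfloor>(z - lo) / h\<rfloor> + 1" by (rule real_of_int_floor_add_one_gt)
      ultimately have "(z - lo) / h < real (Suc j)" by (simp only: of_nat_Suc)
      then have "z - lo \<le> real (Suc j) * h" using h by (simp add: field_simps)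
      then show ?thesis unfolding zz_def by simp
    next
      case False
      then have "j = N - 1" unfolding j_def by simp
      then have "Suc j = N" using Npos by simp
      then show ?thesis using zN z by simp
    qed
    have sum_eq: "(\<Sum>k<N - 1. cs k * max 0 (z - zs k)) = (\<Sum>k<j. (s (Suc k) - s k) * (z - zz (Suc k)))"
    proof -
      have "(\<Sum>k<N - 1. cs k * max 0 (z - zs k)) = (\<Sum>k\<in>{0..<j}. cs k * max 0 (z - zs k)) + (\<Sum>k\<in>{j..<N-1}. cs k * max 0 (z - zs k))"
        using jN by (simp add: lessThan_atLeast0 sum.atLeastLessThan_concat)
      also have "(\<Sum>k\<in>{j..<N-1}. cs k * max 0 (z - zs k)) = 0"
      proof (rule sum.neutral, rule ballI)
        fix k assume "k \<in> {j..<N-1}"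
        then have "zz (Suc j) \<le> zs k" unfolding zs_def by (intro zmono) simp
        then show "cs k * max 0 (z - zs k) = 0" using zj1 by simp
      qed
      also have "(\<Sum>k\<in>{0..<j}. cs k * max 0 (z - zs k)) = (\<Sum>k<j. (s (Suc k) - s k) * (z - zz (Suc k)))"
      proof (rule sum.cong)
        show "{0..<j} = {..<j}" by auto
        fix k assume "k \<in> {..<j}"
        then have "zs k \<le> zz j" unfolding zs_def by (intro zmono) simp
        then show "cs k * max 0 (z - zs k) = (s (Suc k) - s k) * (z - zz (Suc k))"
          using zj unfolding cs_def zs_def by simp
      qed
      finally show ?thesis by simp
    qed
    have L: "\<alpha> + \<beta> * z + (\<Sum>k<N - 1. cs k * max 0 (z - zs k)) = C (zz j) + s j * (z - zz j)"
    proof -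
      have "\<And>k. zz (Suc k) = zz k + h" unfolding zz_def by (simp add: algebra_simps)
      moreover have "\<And>k. s k * h = C (zz (Suc k)) - C (zz k)" unfolding s_def using h by simp
      ultimately have "C (zz 0) + s 0 * (z - zz 0) + (\<Sum>k<j. (s (Suc k) - s k) * (z - zz (Suc k)))
         = C (zz j) + s j * (z - zz j)" by (rule telescope_pl[where C="\<lambda>k. C (zz k)"])
      then show ?thesis unfolding sum_eq \<alpha>_def \<beta>_def by (simp add: algebra_simps)
    qed
    define \<theta> where "\<theta> = (z - zz j) / h"
    have th: "0 \<le> \<theta>" "\<theta> \<le> 1"
      unfolding \<theta>_def using zj zj1 h by (auto simp: field_simps zz_def)
    have L2: "C (zz j) + s j * (z - zz j) = (1 - \<theta>) * C (zz j) + \<theta> * C (zz (Suc j))"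
      unfolding \<theta>_def s_def using h by (simp add: field_simps)
    have jin: "zz j \<in> {lo..hi}" "zz (Suc j) \<in> {lo..hi}" using zin jN Npos by auto
    have dz: "zz (Suc j) - zz j = h" unfolding zz_def by (simp add: algebra_simps)
    have e1: "\<bar>C z - C (zz j)\<bar> < \<epsilon>"
      using dC[OF jin(1) z] zj zj1 dz hd by (simp add: dist_real_def abs_minus_commute)
    have e2: "\<bar>C z - C (zz (Suc j))\<bar> < \<epsilon>"
      using dC[OF jin(2) z] zj zj1 dz hd by (simp add: dist_real_def abs_minus_commute)
    have "C z - ((1 - \<theta>) * C (zz j) + \<theta> * C (zz (Suc j))) = (1 - \<theta>) * (C z - C (zz j)) + \<theta> * (C z - C (zz (Suc j)))"
      by (simp add: algebra_simps)
    also have "\<bar>\<dots>\<bar> \<le> (1 - \<theta>) * \<epsilon> + \<theta> * \<epsilon>"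
    proof -
      have "\<bar>(1 - \<theta>) * (C z - C (zz j))\<bar> \<le> (1 - \<theta>) * \<epsilon>"
        using e1 th by (simp add: abs_mult mult_left_mono)
      moreover have "\<bar>\<theta> * (C z - C (zz (Suc j)))\<bar> \<le> \<theta> * \<epsilon>"
        using e2 th by (simp add: abs_mult mult_left_mono)
      ultimately show ?thesis by (smt (verit))
    qed
    finally show ?thesis unfolding L L2 by (simp add: algebra_simps)
  qed
  have "(\<forall>k. 0 \<le> cs k) \<and> (\<forall>z\<in>{lo..hi}. \<bar>C z - (\<alpha> + \<beta> * z + (\<Sum>k<N - 1. cs k * max 0 (z - zs k)))\<bar> \<le> \<epsilon>)"
    using csnn approx by blast
  note P = this
  define N' where "N' = N - 1"
  show ?thesis
    apply (rule exI[where x=\<alpha>])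
    apply (rule exI[where x=\<beta>])
    apply (rule exI[where x=N'])
    apply (rule exI[where x=zs])
    apply (rule exI[where x=cs])
    using P unfolding N'_def by blast
qed



lemma prior_nonneg: "q \<in> hat_simplex n \<Longrightarrow> i \<le> n \<Longrightarrow> 0 \<le> full_prior n q i"
  by (auto simp: hat_simplex_def full_prior_def)

lemma prior_sum: "(\<Sum>i=0..n. full_prior n q i) = 1"
proof -
  have "(\<Sum>i=0..n. full_prior n q i) = full_prior n q 0 + (\<Sum>i=Suc 0..n. full_prior n q i)"
    by (simp add: sum.atLeast_Suc_atMost)
  also have "(\<Sum>i=Suc 0..n. full_prior n q i) = (\<Sum>i=1..n. q i)"
    by (intro sum.cong) (auto simp: full_prior_def)
  finally show ?thesis by (simp add: full_prior_def)
qed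

lemma strategy_meas: "is_strategy X t \<Longrightarrow> t \<in> borel_measurable (lebesgue_on X)"
  unfolding is_strategy_def
  by (intro measurable_restrict_space1 measurable_completion) simp

lemma borel_version:
  fixes h :: "real \<Rightarrow> real"
  assumes X: "X \<in> sets lebesgue" and h: "h \<in> borel_measurable (lebesgue_on X)"
  shows "\<exists>h'\<in>borel_measurable borel. AE x in lebesgue_on X. h x = h' x"
proof -
  have "(\<lambda>x. indicator X x *\<^sub>R h x) \<in> borel_measurable lebesgue"
    using h X by (subst borel_measurable_restrict_space_iff[symmetric]) auto
  from completion_ex_borel_measurable_real[OF this]
  obtain h' where h': "h' \<in> borel_measurable lborel" and ae: "AE x in lborel. indicator X x *\<^sub>R h x = h' x"
    by blast
  have "AE x in lebesgue. indicator X x *\<^sub>R h x = h' x" using AE_completion[OF ae] .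
  then have "AE x in lebesgue_on X. h x = h' x"
    using X by (subst AE_restrict_space_iff) (auto elim!: eventually_mono)
  moreover have "h' \<in> borel_measurable borel" using h' by simp
  ultimately show ?thesis by blast
qed

locale exper =
  fixes n :: nat and X :: "real set" and f :: "nat \<Rightarrow> real \<Rightarrow> real"
  assumes E: "is_experiment n X f"
begin

abbreviation "M \<equiv> lebesgue_on X"

lemma X_int: "\<exists>a b. a \<le> b \<and> X = {a..b}" using E by (simp add: is_experiment_def)

lemma X_lmeas: "X \<in> lmeasurable" using X_int by auto

lemma finM: "finite_measure M" using X_lmeas by (rule finite_measure_lebesgue_on)

lemma f_nn: "i \<le> n \<Longrightarrow> x \<in> X \<Longrightarrow> 0 \<le> f i x" using E by (simp add: is_experiment_def)
lemma f_int: "i \<le> n \<Longrightarrow> integrable M (f i)" using E by (simp add: is_experiment_def)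
lemma f_one: "i \<le> n \<Longrightarrow> integral\<^sup>L M (f i) = 1" using E by (simp add: is_experiment_def)
lemma f_meas: "i \<le> n \<Longrightarrow> f i \<in> borel_measurable M" using f_int by auto

lemma int_bdd:
  fixes h k :: "real \<Rightarrow> real" and K :: real
  assumes "h \<in> borel_measurable M" "\<And>x. x \<in> X \<Longrightarrow> \<bar>h x\<bar> \<le> K" "integrable M k"
  shows "integrable M (\<lambda>x. h x * k x)"
proof (rule Bochner_Integration.integrable_bound[where f="\<lambda>x. K * k x"])
  show "integrable M (\<lambda>x. K * k x)" using assms(3) by simp
  show "(\<lambda>x. h x * k x) \<in> borel_measurable M" using assms(1,3) by auto
  show "AE x in M. norm (h x * k x) \<le> norm (K * k x)"
  proof (rule AE_I2)
    fix x assume "x \<in> space M"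
    then have "\<bar>h x\<bar> \<le> K" using assms(2) by simp
    then show "norm (h x * k x) \<le> norm (K * k x)"
      by (simp add: abs_mult mult_right_mono)
  qed
qed

definition A :: "(nat \<Rightarrow> real) \<Rightarrow> (nat \<Rightarrow> real) \<Rightarrow> real \<Rightarrow> real" where
  "A q \<gamma> x = (\<Sum>i=0..n. \<gamma> i * full_prior n q i * f i x)"

lemma A_int: "integrable M (A q \<gamma>)"
  unfolding A_def
proof (rule Bochner_Integration.integrable_sum)
  fix i assume "i \<in> {0..n}"
  then show "integrable M (\<lambda>x. \<gamma> i * full_prior n q i * f i x)"
    using f_int[of i] by simp
qed

lemma A_integral: "integral\<^sup>L M (A q \<gamma>) = (\<Sum>i=0..n. \<gamma> i * full_prior n q i)"
proof -
  have "integral\<^sup>L M (A q \<gamma>) = (\<Sum>i=0..n. integral\<^sup>L M (\<lambda>x. \<gamma> i * full_prior n q i * f i x))"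
    unfolding A_def by (rule Bochner_Integration.integral_sum) (use f_int in simp)
  also have "\<dots> = (\<Sum>i=0..n. \<gamma> i * full_prior n q i)"
    by (intro sum.cong) (auto simp: f_one)
  finally show ?thesis .
qed

lemma A_split: "A q \<gamma> x = \<gamma> 0 * full_prior n q 0 * f 0 x + (\<Sum>i=1..n. \<gamma> i * full_prior n q i * f i x)"
  unfolding A_def by (simp add: sum.atLeast_Suc_atMost)

lemma mix_A: "mix n f q x = A q (\<lambda>_. 1) x"
  by (simp add: mix_def A_def)

lemma mix_nn: "q \<in> hat_simplex n \<Longrightarrow> x \<in> X \<Longrightarrow> 0 \<le> mix n f q x"
  unfolding mix_def by (intro sum_nonneg mult_nonneg_nonneg prior_nonneg f_nn) auto

lemma key:
  assumes q: "q \<in> hat_simplex n" and x: "x \<in> X"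
  shows "(\<gamma> 0 * (1 - (\<Sum>i=1..n. posterior n f q i x)) + (\<Sum>i=1..n. \<gamma> i * posterior n f q i x))
           * mix n f q x = A q \<gamma> x"
proof (cases "mix n f q x = 0")
  case True
  have nn: "\<forall>j\<in>{0..n}. 0 \<le> full_prior n q j * f j x"
    using q x by (auto intro!: mult_nonneg_nonneg prior_nonneg f_nn)
  have "\<forall>j\<in>{0..n}. full_prior n q j * f j x = 0"
    using True nn unfolding mix_def by (subst sum_nonneg_eq_0_iff[symmetric]) auto
  then have "A q \<gamma> x = 0" unfolding A_def by (auto intro!: sum.neutral)
  then show ?thesis using True by simp
next
  case False
  have pm: "posterior n f q i x * mix n f q x = full_prior n q i * f i x" for i
    using False by (simp add: posterior_def)
  have m: "mix n f q x = full_prior n q 0 * f 0 x + (\<Sum>i=1..n. full_prior n q i * f i x)"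
    unfolding mix_def by (simp add: sum.atLeast_Suc_atMost)
  have "(\<gamma> 0 * (1 - (\<Sum>i=1..n. posterior n f q i x)) + (\<Sum>i=1..n. \<gamma> i * posterior n f q i x))
           * mix n f q x = \<gamma> 0 * (mix n f q x - (\<Sum>i=1..n. posterior n f q i x * mix n f q x))
             + (\<Sum>i=1..n. \<gamma> i * (posterior n f q i x * mix n f q x))"
    by (simp add: algebra_simps sum_distrib_left sum_distrib_right)
  also have "\<dots> = \<gamma> 0 * (mix n f q x - (\<Sum>i=1..n. full_prior n q i * f i x))
             + (\<Sum>i=1..n. \<gamma> i * (full_prior n q i * f i x))"
    by (simp add: pm)
  also have "\<dots> = A q \<gamma> x" unfolding A_split m by (simp add: algebra_simps)
  finally show ?thesis .
qed

lemma post_nn: "q \<in> hat_simplex n \<Longrightarrow> x \<in> X \<Longrightarrow> i \<le> n \<Longrightarrow> 0 \<le> posterior n f q i x"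
  unfolding posterior_def
  by (intro divide_nonneg_nonneg mult_nonneg_nonneg prior_nonneg f_nn mix_nn) auto

lemma post_sum_le: assumes "q \<in> hat_simplex n" "x \<in> X"
  shows "(\<Sum>i=1..n. posterior n f q i x) \<le> 1"
proof (cases "mix n f q x = 0")
  case True then show ?thesis by (simp add: posterior_def)
next
  case False
  have mpos: "0 < mix n f q x" using False mix_nn[OF assms] by simp
  have "(\<Sum>i=1..n. posterior n f q i x) = (\<Sum>i=1..n. full_prior n q i * f i x) / mix n f q x"
    by (simp add: posterior_def sum_divide_distrib)
  also have "\<dots> \<le> 1"
  proof -
    have "(\<Sum>i=1..n. full_prior n q i * f i x) \<le> mix n f q x"
      unfolding mix_def using assms
      by (intro sum_mono2) (auto intro!: mult_nonneg_nonneg prior_nonneg f_nn)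
    then show ?thesis using mpos by simp
  qed
  finally show ?thesis .
qed

lemma post_meas: assumes "i \<le> n" shows "posterior n f q i \<in> borel_measurable M"
proof -
  have "mix n f q \<in> borel_measurable M" unfolding mix_def
    using f_meas by (intro borel_measurable_sum borel_measurable_times) auto
  moreover have "(\<lambda>x. full_prior n q i * f i x) \<in> borel_measurable M"
    using f_meas \<open>i \<le> n\<close> by auto
  ultimately show ?thesis unfolding posterior_def by measurable
qed

lemma A_diff: "A q (\<lambda>i. \<alpha> i - \<beta> i) x = A q \<alpha> x - A q \<beta> x"
  unfolding A_def by (simp add: algebra_simps sum_subtractf)

definition H :: "(nat \<Rightarrow> real) \<Rightarrow> (nat \<Rightarrow> real) \<Rightarrow> real" where
  "H q \<gamma> = integral\<^sup>L M (\<lambda>x. max 0 (A q \<gamma> x))"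

lemma Hint: "integrable M (\<lambda>x. max 0 (A q \<gamma> x))"
  using A_int by (intro integrable_max) auto

lemma util_key: "q \<in> hat_simplex n \<Longrightarrow> x \<in> X \<Longrightarrow>
   util_belief n u a (\<lambda>i. posterior n f q i x) * mix n f q x = A q (u a) x"
  unfolding util_belief_def by (subst key[symmetric]) (auto simp: mult.commute)

lemma max_mult_nn: "0 \<le> (m::real) \<Longrightarrow> max a b * m = max (a * m) (b * m)"
  using mult_right_mono[of a b m] mult_right_mono[of b a m] by (auto simp: max_def)

lemma Vbar_eq:
  assumes q: "q \<in> hat_simplex n"
  shows "Vbar n X f u q = (\<Sum>i=0..n. u False i * full_prior n q i)
                         + H q (\<lambda>i. u True i - u False i)"
proof -
  have "Vbar n X f u q = integral\<^sup>L M (\<lambda>x. A q (u False) x + max 0 (A q (\<lambda>i. u True i - u False i) x))"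
    unfolding Vbar_def expect_post_def
  proof (rule Bochner_Integration.integral_cong[OF refl])
    fix x assume x: "x \<in> space M"
    then have x: "x \<in> X" by simp
    show "value_fn n u (\<lambda>i. posterior n f q i x) * mix n f q x =
         A q (u False) x + max 0 (A q (\<lambda>i. u True i - u False i) x)"
      unfolding value_fn_def A_diff max_mult_nn[OF mix_nn[OF q x]] util_key[OF q x]
      by linarith
  qed
  also have "\<dots> = integral\<^sup>L M (A q (u False)) + H q (\<lambda>i. u True i - u False i)"
    unfolding H_def by (rule Bochner_Integration.integral_add[OF A_int Hint])
  finally show ?thesis by (simp add: A_integral)
qed

lemma E_hinge:
  assumes q: "q \<in> hat_simplex n"
  shows "expect_post n X f q (\<lambda>p. max 0 (\<gamma> 0 + (\<Sum>i=1..n. (\<gamma> i - \<gamma> 0) * p i))) = H q \<gamma>"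
  unfolding expect_post_def H_def
proof (rule Bochner_Integration.integral_cong[OF refl])
  fix x assume "x \<in> space M"
  then have x: "x \<in> X" by simp
  have e: "\<gamma> 0 + (\<Sum>i=1..n. (\<gamma> i - \<gamma> 0) * posterior n f q i x) =
     \<gamma> 0 * (1 - (\<Sum>i=1..n. posterior n f q i x)) + (\<Sum>i=1..n. \<gamma> i * posterior n f q i x)"
    by (simp add: algebra_simps sum_subtractf sum_distrib_left)
  show "max 0 (\<gamma> 0 + (\<Sum>i=1..n. (\<gamma> i - \<gamma> 0) * posterior n f q i x)) * mix n f q x = max 0 (A q \<gamma> x)"
    unfolding e max_mult_nn[OF mix_nn[OF q x]] key[OF q x] by simp
qed

lemma E_lin:
  assumes q: "q \<in> hat_simplex n"
  shows "expect_post n X f q (\<lambda>p. (\<Sum>i=1..n. b i * p i)) = (\<Sum>i=1..n. b i * full_prior n q i)"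
proof -
  let ?g = "\<lambda>i. if i = 0 then 0 else b i"
  have "expect_post n X f q (\<lambda>p. (\<Sum>i=1..n. b i * p i)) = integral\<^sup>L M (A q ?g)"
    unfolding expect_post_def
  proof (rule Bochner_Integration.integral_cong[OF refl])
    fix x assume "x \<in> space M"
    then have x: "x \<in> X" by simp
    have "(\<Sum>i=1..n. b i * posterior n f q i x) =
       ?g 0 * (1 - (\<Sum>i=1..n. posterior n f q i x)) + (\<Sum>i=1..n. ?g i * posterior n f q i x)"
      by (auto intro!: sum.cong)
    then show "(\<Sum>i=1..n. b i * posterior n f q i x) * mix n f q x = A q ?g x"
      using key[OF q x, of ?g] by simp
  qed
  also have "\<dots> = (\<Sum>i=1..n. b i * full_prior n q i)"
    unfolding A_integral by (simp add: sum.atLeast_Suc_atMost)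
  finally show ?thesis .
qed

lemma E_one:
  assumes q: "q \<in> hat_simplex n"
  shows "integral\<^sup>L M (mix n f q) = 1"
  using prior_sum[of n q] unfolding mix_A A_integral by simp

definition V :: "(real \<Rightarrow> real) \<Rightarrow> nat \<Rightarrow> real" where
  "V t i = integral\<^sup>L M (\<lambda>x. t x * f i x)"

lemma strat_bdd: "is_strategy X t \<Longrightarrow> x \<in> X \<Longrightarrow> \<bar>t x\<bar> \<le> 1"
  by (auto simp: is_strategy_def)

lemma int_tf: "is_strategy X t \<Longrightarrow> i \<le> n \<Longrightarrow> integrable M (\<lambda>x. t x * f i x)"
  by (rule int_bdd[OF strategy_meas strat_bdd f_int])

lemma int_th: "is_strategy X t \<Longrightarrow> integrable M h \<Longrightarrow> integrable M (\<lambda>x. t x * h x)"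
  by (rule int_bdd[OF strategy_meas strat_bdd])

lemma payoff_eq:
  assumes t: "is_strategy X t" and i: "i \<le> n"
  shows "strat_payoff X f u t i = u False i + (u True i - u False i) * V t i"
proof -
  have "strat_payoff X f u t i = integral\<^sup>L M (\<lambda>x. u False i * f i x + (u True i - u False i) * (t x * f i x))"
    unfolding strat_payoff_def by (rule Bochner_Integration.integral_cong) (auto simp: algebra_simps)
  also have "\<dots> = u False i * integral\<^sup>L M (f i) + (u True i - u False i) * V t i"
    unfolding V_def using int_tf[OF t i] f_int[OF i] by simp
  finally show ?thesis using f_one[OF i] by simp
qed

lemma tA: assumes t: "is_strategy X t"
  shows "integral\<^sup>L M (\<lambda>x. t x * A q \<gamma> x) = (\<Sum>i=0..n. \<gamma> i * full_prior n q i * V t i)"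
proof -
  have "integral\<^sup>L M (\<lambda>x. t x * A q \<gamma> x) = integral\<^sup>L M (\<lambda>x. \<Sum>i=0..n. \<gamma> i * full_prior n q i * (t x * f i x))"
    unfolding A_def by (rule Bochner_Integration.integral_cong) (auto simp: sum_distrib_left algebra_simps)
  also have "\<dots> = (\<Sum>i=0..n. integral\<^sup>L M (\<lambda>x. \<gamma> i * full_prior n q i * (t x * f i x)))"
    by (rule Bochner_Integration.integral_sum) (use int_tf[OF t] in simp)
  also have "\<dots> = (\<Sum>i=0..n. \<gamma> i * full_prior n q i * V t i)"
    unfolding V_def by simp
  finally show ?thesis .
qed

lemma strat_le_pos:
  assumes t: "is_strategy X t" and h: "integrable M h"
  shows "integral\<^sup>L M (\<lambda>x. t x * h x) \<le> integral\<^sup>L M (\<lambda>x. max 0 (h x))"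
proof (rule integral_mono[OF int_th[OF t h]])
  show "integrable M (\<lambda>x. max 0 (h x))" using h by auto
  fix x assume "x \<in> space M"
  then have "0 \<le> t x" "t x \<le> 1" using t by (auto simp: is_strategy_def)
  then show "t x * h x \<le> max 0 (h x)"
  proof (cases "h x \<ge> 0")
    case True
    then have "t x * h x \<le> 1 * h x" using \<open>t x \<le> 1\<close> by (intro mult_right_mono) auto
    then show ?thesis by simp
  next
    case False
    then have "t x * h x \<le> 0" using \<open>0 \<le> t x\<close> by (simp add: mult_nonneg_nonpos)
    then show ?thesis by simp
  qed
qed

lemma strat_pos:
  assumes h: "integrable M h"
  shows "\<exists>t. is_strategy X t \<and> integral\<^sup>L M (\<lambda>x. t x * h x) = integral\<^sup>L M (\<lambda>x. max 0 (h x))"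
proof -
  have hm: "h \<in> borel_measurable M" using h by simp
  have Xs: "X \<in> sets lebesgue" using X_lmeas by (simp add: fmeasurableD)
  obtain h' where h': "h' \<in> borel_measurable borel" and ae: "AE x in M. h x = h' x"
    using borel_version[OF Xs hm] by blast
  define t where "t x = (if 0 < h' x then 1 else 0::real)" for x
  have "t \<in> borel_measurable borel" unfolding t_def using h' by measurable
  then have t: "is_strategy X t" unfolding is_strategy_def t_def by auto
  have "integral\<^sup>L M (\<lambda>x. t x * h x) = integral\<^sup>L M (\<lambda>x. max 0 (h x))"
  proof (rule integral_cong_AE)
    show "(\<lambda>x. t x * h x) \<in> borel_measurable M" using int_th[OF t h] by blast
    show "(\<lambda>x. max 0 (h x)) \<in> borel_measurable M" using hm by measurable
    show "AE x in M. t x * h x = max 0 (h x)" using ae by eventually_elim (auto simp: t_def)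
  qed
  then show ?thesis using t by blast
qed

lemma strat_int: assumes "is_strategy X t" shows "integrable M t"
proof -
  have "integrable M (\<lambda>x. t x * 1)"
    by (rule int_bdd[OF strategy_meas[OF assms] strat_bdd[OF assms] finite_measure.integrable_const[OF finM]])
  then show ?thesis by simp
qed

lemma strat_int2: "is_strategy X t \<Longrightarrow> is_strategy X t' \<Longrightarrow> integrable M (\<lambda>x. t x * t' x)"
  by (rule int_bdd[OF strategy_meas strat_bdd strat_int])

lemma mid_strat: assumes "is_strategy X t1" "is_strategy X t2"
  shows "is_strategy X (\<lambda>x. (t1 x + t2 x) / 2)"
proof -
  have m: "(\<lambda>x. (t1 x + t2 x) / 2) \<in> borel_measurable borel" using assms by (auto simp: is_strategy_def)
  have "0 \<le> (t1 x + t2 x) / 2 \<and> (t1 x + t2 x) / 2 \<le> 1" if x: "x \<in> X" for x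
  proof -
    have "0 \<le> t1 x" "t1 x \<le> 1" "0 \<le> t2 x" "t2 x \<le> 1" using assms x by (auto simp: is_strategy_def)
    then show ?thesis by auto
  qed
  then show ?thesis using m by (auto simp: is_strategy_def)
qed

lemma V_mid: assumes "is_strategy X t1" "is_strategy X t2" "i \<le> n"
  shows "V (\<lambda>x. (t1 x + t2 x) / 2) i = (V t1 i + V t2 i) / 2"
proof -
  have "V (\<lambda>x. (t1 x + t2 x) / 2) i = integral\<^sup>L M (\<lambda>x. (t1 x * f i x + t2 x * f i x) / 2)"
    unfolding V_def by (rule Bochner_Integration.integral_cong) (auto simp: algebra_simps)
  also have "\<dots> = (V t1 i + V t2 i) / 2"
    unfolding V_def using int_tf[OF assms(1,3)] int_tf[OF assms(2,3)] by simp
  finally show ?thesis .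
qed

lemma abs_le_sq: "0 < (e::real) \<Longrightarrow> \<bar>a\<bar> \<le> e + a^2 / (4 * e)"
proof -
  assume e: "0 < e"
  have "0 \<le> (\<bar>a\<bar> - 2 * e)^2" by simp
  then have "4 * e * \<bar>a\<bar> \<le> 4 * e * e + a^2" by (simp add: power2_eq_square algebra_simps)
  then show ?thesis using e by (simp add: field_simps)
qed

lemma min_exists:
  fixes \<Phi> :: "(nat \<Rightarrow> real) \<Rightarrow> real"
  assumes nn: "\<And>v. 0 \<le> \<Phi> v"
    and cong: "\<And>v v'. (\<And>i. i \<le> n \<Longrightarrow> v i = v' i) \<Longrightarrow> \<Phi> v = \<Phi> v'"
    and mid: "\<And>v v'. \<Phi> (\<lambda>i. (v i + v' i) / 2) \<le> max (\<Phi> v) (\<Phi> v')"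
    and cont: "\<And>vs v. (\<And>i. i \<le> n \<Longrightarrow> (\<lambda>k. vs k i) \<longlonglongrightarrow> v i) \<Longrightarrow> (\<lambda>k. \<Phi> (vs k)) \<longlonglongrightarrow> \<Phi> v"
  shows "\<exists>t. is_strategy X t \<and> (\<forall>t'. is_strategy X t' \<longrightarrow> \<Phi> (V t) \<le> \<Phi> (V t'))"
proof -
  define SS where "SS = {t. is_strategy X t}"
  define \<delta> where "\<delta> = Inf ((\<lambda>t. \<Phi> (V t)) ` SS)"
  have z: "(\<lambda>_. 0) \<in> SS" unfolding SS_def is_strategy_def by auto
  have bddP: "bdd_below ((\<lambda>t. \<Phi> (V t)) ` SS)" by (rule bdd_belowI[where m=0]) (auto intro: nn)
  have \<delta>le: "\<delta> \<le> \<Phi> (V t)" if "t \<in> SS" for t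
    unfolding \<delta>_def using that bddP by (rule cInf_lower[OF imageI])
  define S where "S m = {t \<in> SS. \<Phi> (V t) < \<delta> + 1 / real (Suc m)}" for m
  have Sne: "S m \<noteq> {}" for m
  proof -
    have "Inf ((\<lambda>t. \<Phi> (V t)) ` SS) < \<delta> + 1 / real (Suc m)" unfolding \<delta>_def by simp
    from cInf_lessD[OF _ this] z obtain y where "y \<in> (\<lambda>t. \<Phi> (V t)) ` SS" "y < \<delta> + 1 / real (Suc m)"
      by blast
    then show ?thesis unfolding S_def by auto
  qed
  have Smono: "S m' \<subseteq> S m" if "m \<le> m'" for m m'
  proof -
    have "1 / real (Suc m') \<le> 1 / real (Suc m)" using that by (simp add: frac_le)
    then show ?thesis unfolding S_def by auto
  qed
  define \<mu> where "\<mu> = measure M (space M)"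
  define N where "N t = integral\<^sup>L M (\<lambda>x. t x * t x)" for t :: "real \<Rightarrow> real"
  have Nnn: "0 \<le> N t" for t unfolding N_def by simp
  have Nle: "N t \<le> \<mu>" if "t \<in> SS" for t
  proof -
    have "N t \<le> integral\<^sup>L M (\<lambda>x. 1)" unfolding N_def
    proof (rule integral_mono)
      show "integrable M (\<lambda>x. t x * t x)" using that strat_int2 by (auto simp: SS_def)
      show "integrable M (\<lambda>x. 1::real)" using finite_measure.integrable_const[OF finM, of "1::real"] by simp
      fix x assume "x \<in> space M"
      then have "0 \<le> t x" "t x \<le> 1" using that by (auto simp: SS_def is_strategy_def)
      then show "t x * t x \<le> 1" by (simp add: mult_le_one)
    qed
    then show ?thesis by (simp add: \<mu>_def)
  qed
  define D where "D m = Inf (N ` S m)" for m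
  have bddN: "bdd_below (N ` S m)" for m by (rule bdd_belowI[where m=0]) (auto intro: Nnn)
  have Dle: "D m \<le> N t" if "t \<in> S m" for m t
    unfolding D_def using that bddN by (rule cInf_lower[OF imageI])
  have Dmono: "D m \<le> D m'" if "m \<le> m'" for m m'
    unfolding D_def using Sne[of m'] bddN[of m] Smono[OF that] by (intro cInf_superset_mono) auto
  have Dmu: "D m \<le> \<mu>" for m
  proof -
    obtain t where "t \<in> S m" using Sne by blast
    then show ?thesis using Dle[of t m] Nle[of t] by (auto simp: S_def)
  qed
  define Dl where "Dl = (SUP m. D m)"
  have bddD: "bdd_above (range D)" by (rule bdd_aboveI[where M=\<mu>]) (auto intro: Dmu)
  have DlimD: "D \<longlonglongrightarrow> Dl" unfolding Dl_def
    by (rule LIMSEQ_incseq_SUP[OF bddD]) (simp add: incseq_def Dmono)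
  have DleDl: "D m \<le> Dl" for m unfolding Dl_def using bddD by (rule cSUP_upper[OF UNIV_I])
  have "\<exists>h. h \<in> S m \<and> N h < D m + 1 / real (Suc m)" for m
  proof -
    have "Inf (N ` S m) < D m + 1 / real (Suc m)" unfolding D_def by simp
    from cInf_lessD[OF _ this] Sne[of m] show ?thesis by blast
  qed
  then obtain hh where hhS: "\<And>m. hh m \<in> S m" and hhN: "\<And>m. N (hh m) < D m + 1 / real (Suc m)"
    by metis
  have hhs: "is_strategy X (hh m)" for m using hhS[of m] by (auto simp: S_def SS_def)
  define \<eta> where "\<eta> m = 2 * (Dl - D m) + 4 / real (Suc m)" for m
  have sq_bound: "integral\<^sup>L M (\<lambda>x. (hh m x - hh m' x)^2) < \<eta> m" if "m \<le> m'" for m m'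
  proof -
    define md where "md = (\<lambda>x. (hh m x + hh m' x) / 2)"
    have mds: "is_strategy X md" unfolding md_def by (rule mid_strat[OF hhs hhs])
    have "\<Phi> (V md) = \<Phi> (\<lambda>i. (V (hh m) i + V (hh m') i) / 2)"
      unfolding md_def by (rule cong) (rule V_mid[OF hhs hhs])
    also have "\<dots> \<le> max (\<Phi> (V (hh m))) (\<Phi> (V (hh m')))" by (rule mid)
    also have "\<dots> < \<delta> + 1 / real (Suc m)"
      using hhS[of m] Smono[OF that] hhS[of m'] by (auto simp: S_def)
    finally have "md \<in> S m" using mds by (auto simp: S_def SS_def)
    then have Dmd: "D m \<le> N md" by (rule Dle)
    have "integral\<^sup>L M (\<lambda>x. (hh m x - hh m' x)^2)
        = integral\<^sup>L M (\<lambda>x. 2 * (hh m x * hh m x) + 2 * (hh m' x * hh m' x) - 4 * (md x * md x))"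
      unfolding md_def by (rule Bochner_Integration.integral_cong) (auto simp: power2_eq_square algebra_simps)
    also have "\<dots> = 2 * N (hh m) + 2 * N (hh m') - 4 * N md"
      unfolding N_def using strat_int2[OF hhs hhs, of m m] strat_int2[OF hhs hhs, of m' m'] strat_int2[OF mds mds]
      by simp
    also have "\<dots> < 2 * (D m + 1 / real (Suc m)) + 2 * (D m' + 1 / real (Suc m')) - 4 * D m"
      using hhN[of m] hhN[of m'] Dmd by (smt (verit))
    also have "\<dots> \<le> \<eta> m"
    proof -
      have "1 / real (Suc m') \<le> 1 / real (Suc m)" using that by (simp add: frac_le)
      have "\<And>x y d d' l::real. x \<le> y \<Longrightarrow> d' \<le> l \<Longrightarrow> 2*(d+y) + 2*(d'+x) - 4*d \<le> 2*(l-d) + 4*y"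
        by (smt (verit))
      from this[OF \<open>1 / real (Suc m') \<le> 1 / real (Suc m)\<close> DleDl[of m'], of "D m"]
      show ?thesis unfolding \<eta>_def by simp
    qed
    finally show ?thesis .
  qed
  have \<eta>mono: "\<eta> m' \<le> \<eta> m" if "m \<le> m'" for m m'
  proof -
    have "4 / real (Suc m') \<le> 4 / real (Suc m)" using that by (simp add: frac_le)
    then show ?thesis unfolding \<eta>_def using Dmono[OF that] by (intro add_mono) simp_all
  qed
  have \<eta>lim: "\<eta> \<longlonglongrightarrow> 0"
  proof -
    have a: "(\<lambda>m. 1 / real (Suc m)) \<longlonglongrightarrow> 0"
      using LIMSEQ_inverse_real_of_nat by (simp add: inverse_eq_divide)
    have b: "(\<lambda>m. Dl - D m) \<longlonglongrightarrow> 0" using tendsto_diff[OF tendsto_const[of Dl] DlimD] by simp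
    have "(\<lambda>m. 2 * (Dl - D m) + 4 * (1 / real (Suc m))) \<longlonglongrightarrow> 2 * 0 + 4 * 0"
      by (intro tendsto_intros a b)
    then show ?thesis unfolding \<eta>_def by simp
  qed
  have hhint: "integrable M (hh m)" for m using strat_int[OF hhs] .
  have \<mu>nn: "0 \<le> \<mu>" unfolding \<mu>_def by simp
  have L1: "integral\<^sup>L M (\<lambda>x. norm (hh m x - hh m' x)) \<le> e * \<mu> + \<eta> m / (4 * e)"
    if "m \<le> m'" "0 < e" for m m' e
  proof -
    have i2: "integrable M (\<lambda>x. (hh m x - hh m' x)^2)"
      using strat_int2[OF hhs hhs, of m m] strat_int2[OF hhs hhs, of m' m'] strat_int2[OF hhs hhs, of m m']
      by (simp add: power2_eq_square algebra_simps)
    have "integral\<^sup>L M (\<lambda>x. norm (hh m x - hh m' x)) \<le> integral\<^sup>L M (\<lambda>x. e + (hh m x - hh m' x)^2 / (4 * e))"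
    proof (rule integral_mono)
      show "integrable M (\<lambda>x. norm (hh m x - hh m' x))" using hhint by auto
      show "integrable M (\<lambda>x. e + (hh m x - hh m' x)^2 / (4 * e))"
        using i2 finite_measure.integrable_const[OF finM, of e] by (intro Bochner_Integration.integrable_add) auto
      fix x show "norm (hh m x - hh m' x) \<le> e + (hh m x - hh m' x)^2 / (4 * e)"
        using abs_le_sq[OF that(2)] by simp
    qed
    also have "\<dots> = e * \<mu> + integral\<^sup>L M (\<lambda>x. (hh m x - hh m' x)^2) / (4 * e)"
      using i2 finite_measure.integrable_const[OF finM, of e] by (simp add: \<mu>_def)
    also have "\<dots> \<le> e * \<mu> + \<eta> m / (4 * e)"
      using sq_bound[OF that(1)] that(2) by (simp add: divide_right_mono)
    finally show ?thesis .
  qed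
  have cauchy: "\<exists>N. \<forall>i\<ge>N. \<forall>j\<ge>N. integral\<^sup>L M (\<lambda>x. norm (hh i x - hh j x)) < \<epsilon>" if "0 < \<epsilon>" for \<epsilon>
  proof -
    define e where "e = \<epsilon> / (2 * (\<mu> + 1))"
    have e: "0 < e" unfolding e_def using that \<mu>nn by simp
    have "0 < 2 * e * \<epsilon>" using e that by simp
    then obtain N0 where N0: "\<And>m. m \<ge> N0 \<Longrightarrow> \<bar>\<eta> m\<bar> < 2 * e * \<epsilon>"
      using \<eta>lim unfolding LIMSEQ_def dist_real_def by fastforce
    have emu: "e * \<mu> < \<epsilon> / 2"
    proof -
      have "e * \<mu> = \<epsilon> / 2 * (\<mu> / (\<mu> + 1))" unfolding e_def by (simp add: field_simps)
      also have "\<dots> < \<epsilon> / 2 * 1" using that \<mu>nn by (intro mult_strict_left_mono) auto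
      finally show ?thesis by simp
    qed
    have bnd: "integral\<^sup>L M (\<lambda>x. norm (hh i x - hh j x)) < \<epsilon>" if "N0 \<le> i" "i \<le> j" for i j
    proof -
      have "\<eta> i < 2 * e * \<epsilon>" using N0[OF that(1)] by simp
      then have "\<eta> i / (4 * e) < \<epsilon> / 2" using e by (simp add: field_simps)
      then show ?thesis using L1[OF that(2) e] emu by linarith
    qed
    have "\<forall>i\<ge>N0. \<forall>j\<ge>N0. integral\<^sup>L M (\<lambda>x. norm (hh i x - hh j x)) < \<epsilon>"
    proof (intro allI impI)
      fix i j assume "N0 \<le> i" "N0 \<le> j"
      show "integral\<^sup>L M (\<lambda>x. norm (hh i x - hh j x)) < \<epsilon>"
      proof (cases "i \<le> j")
        case True then show ?thesis using bnd \<open>N0 \<le> i\<close> by blast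
      next
        case False
        then have "integral\<^sup>L M (\<lambda>x. norm (hh j x - hh i x)) < \<epsilon>" using bnd \<open>N0 \<le> j\<close> by simp
        moreover have "(\<lambda>x. norm (hh j x - hh i x)) = (\<lambda>x. norm (hh i x - hh j x))"
          by (simp add: abs_minus_commute)
        ultimately show ?thesis by simp
      qed
    qed
    then show ?thesis by blast
  qed
  obtain r where r: "strict_mono r" and aeC: "AE x in M. Cauchy (\<lambda>k. hh (r k) x)"
    using cauchy_L1_AE_cauchy_subseq[OF hhint cauchy] by metis
  define t where "t x = max 0 (min 1 (lim (\<lambda>k. hh (r k) x)))" for x
  have hhb: "hh m \<in> borel_measurable borel" for m using hhs[of m] by (simp add: is_strategy_def)
  have "(\<lambda>x. lim (\<lambda>k. hh (r k) x)) \<in> borel_measurable borel"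
    by (rule borel_measurable_lim_metric) (rule hhb)
  then have "t \<in> borel_measurable borel" unfolding t_def by measurable
  then have ts: "is_strategy X t" unfolding is_strategy_def t_def by auto
  have aelim: "AE x in M. (\<lambda>k. hh (r k) x) \<longlonglongrightarrow> t x"
    using aeC
  proof (rule AE_mp[OF _ AE_I2[where M=M]])
    fix x assume x: "x \<in> space M"
    show "Cauchy (\<lambda>k. hh (r k) x) \<longrightarrow> (\<lambda>k. hh (r k) x) \<longlonglongrightarrow> t x"
    proof
      assume "Cauchy (\<lambda>k. hh (r k) x)"
      then have L: "(\<lambda>k. hh (r k) x) \<longlonglongrightarrow> lim (\<lambda>k. hh (r k) x)"
        by (simp add: Cauchy_convergent_iff convergent_LIMSEQ_iff)
      have b01: "0 \<le> hh (r k) x \<and> hh (r k) x \<le> 1" for k using hhs[of "r k"] x by (auto simp: is_strategy_def)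
      have "0 \<le> lim (\<lambda>k. hh (r k) x)" using b01 by (intro LIMSEQ_le_const[OF L]) auto
      moreover have "lim (\<lambda>k. hh (r k) x) \<le> 1" using b01 by (intro LIMSEQ_le_const2[OF L]) auto
      ultimately have "t x = lim (\<lambda>k. hh (r k) x)" unfolding t_def by simp
      then show "(\<lambda>k. hh (r k) x) \<longlonglongrightarrow> t x" using L by simp
    qed
  qed
  have Vlim: "(\<lambda>k. V (hh (r k)) i) \<longlonglongrightarrow> V t i" if i: "i \<le> n" for i
    unfolding V_def
  proof (rule integral_dominated_convergence[where w="f i"])
    show "(\<lambda>x. t x * f i x) \<in> borel_measurable M" using int_tf[OF ts i] by blast
    show "(\<lambda>x. hh (r k) x * f i x) \<in> borel_measurable M" for k using int_tf[OF hhs i] by blast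
    show "integrable M (f i)" by (rule f_int[OF i])
    show "AE x in M. (\<lambda>k. hh (r k) x * f i x) \<longlonglongrightarrow> t x * f i x"
      using aelim by eventually_elim (intro tendsto_mult_right)
    show "AE x in M. norm (hh (r k) x * f i x) \<le> f i x" for k
    proof (rule AE_I2)
      fix x assume "x \<in> space M"
      then have x: "x \<in> X" by simp
      have "\<bar>hh (r k) x\<bar> \<le> 1" by (rule strat_bdd[OF hhs x])
      then have "\<bar>hh (r k) x\<bar> * \<bar>f i x\<bar> \<le> 1 * \<bar>f i x\<bar>" by (intro mult_right_mono) auto
      then show "norm (hh (r k) x * f i x) \<le> f i x" using f_nn[OF i x] by (simp add: abs_mult)
    qed
  qed
  have Plim: "(\<lambda>k. \<Phi> (V (hh (r k)))) \<longlonglongrightarrow> \<Phi> (V t)" by (rule cont[OF Vlim])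
  have ub: "(\<lambda>k. \<delta> + 1 / real (Suc k)) \<longlonglongrightarrow> \<delta> + 0"
    using LIMSEQ_inverse_real_of_nat by (intro tendsto_intros) (simp add: inverse_eq_divide)
  have "\<Phi> (V t) \<le> \<delta> + 0"
  proof (rule LIMSEQ_le[OF Plim ub], intro exI allI impI)
    fix k
    have "\<Phi> (V (hh (r k))) < \<delta> + 1 / real (Suc (r k))" using hhS[of "r k"] by (simp add: S_def)
    also have "\<dots> \<le> \<delta> + 1 / real (Suc k)" using seq_suble[OF r, of k] by (simp add: frac_le)
    finally show "\<Phi> (V (hh (r k))) \<le> \<delta> + 1 / real (Suc k)" by simp
  qed
  then have "\<forall>t'. is_strategy X t' \<longrightarrow> \<Phi> (V t) \<le> \<Phi> (V t')"
    using \<delta>le by (auto simp: SS_def intro: order_trans)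
  then show ?thesis using ts by blast
qed

end


context exper begin

lemma hinge_pt:
  assumes q: "q \<in> hat_simplex n" and x: "x \<in> X"
  shows "max 0 (\<gamma> 0 + (\<Sum>i=1..n. (\<gamma> i - \<gamma> 0) * posterior n f q i x)) * mix n f q x = max 0 (A q \<gamma> x)"
proof -
  have e: "\<gamma> 0 + (\<Sum>i=1..n. (\<gamma> i - \<gamma> 0) * posterior n f q i x) =
     \<gamma> 0 * (1 - (\<Sum>i=1..n. posterior n f q i x)) + (\<Sum>i=1..n. \<gamma> i * posterior n f q i x)"
    by (simp add: algebra_simps sum_subtractf sum_distrib_left)
  show ?thesis unfolding e max_mult_nn[OF mix_nn[OF q x]] key[OF q x] by simp
qed

lemma lin_pt:
  assumes q: "q \<in> hat_simplex n" and x: "x \<in> X"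
  shows "(\<Sum>i=1..n. b i * posterior n f q i x) * mix n f q x = A q (\<lambda>i. if i = 0 then 0 else b i) x"
proof -
  let ?g = "\<lambda>i. if i = 0 then 0 else b i"
  have "(\<Sum>i=1..n. b i * posterior n f q i x) =
     ?g 0 * (1 - (\<Sum>i=1..n. posterior n f q i x)) + (\<Sum>i=1..n. ?g i * posterior n f q i x)"
    by (auto intro!: sum.cong)
  then show ?thesis using key[OF q x, of ?g] by simp
qed

lemma mix_int: "integrable M (mix n f q)"
proof -
  have "mix n f q = A q (\<lambda>_. 1)" by (rule ext) (rule mix_A)
  then show ?thesis using A_int by simp
qed

lemma Z_meas: "(\<lambda>x. \<Sum>i=1..n. b i * posterior n f q i x) \<in> borel_measurable M"
proof (rule borel_measurable_sum)
  fix i assume "i \<in> {1..n}"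
  then have "posterior n f q i \<in> borel_measurable M" by (intro post_meas) simp
  then show "(\<lambda>x. b i * posterior n f q i x) \<in> borel_measurable M" by simp
qed

lemma Z_bound:
  assumes q: "q \<in> hat_simplex n" and x: "x \<in> X"
  shows "\<bar>\<Sum>i=1..n. b i * posterior n f q i x\<bar> \<le> (\<Sum>i=1..n. \<bar>b i\<bar>)"
proof -
  have "\<bar>\<Sum>i=1..n. b i * posterior n f q i x\<bar> \<le> (\<Sum>i=1..n. \<bar>b i * posterior n f q i x\<bar>)"
    by (rule sum_abs)
  also have "\<dots> \<le> (\<Sum>i=1..n. \<bar>b i\<bar>)"
  proof (rule sum_mono)
    fix i assume i: "i \<in> {1..n}"
    have p0: "0 \<le> posterior n f q i x" using post_nn[OF q x] i by simp
    have "posterior n f q i x \<le> (\<Sum>i=1..n. posterior n f q i x)"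
      using i post_nn[OF q x] by (intro member_le_sum) auto
    then have p1: "posterior n f q i x \<le> 1" using post_sum_le[OF q x] by simp
    have "\<bar>b i\<bar> * posterior n f q i x \<le> \<bar>b i\<bar> * 1" using p1 by (intro mult_left_mono) auto
    then show "\<bar>b i * posterior n f q i x\<bar> \<le> \<bar>b i\<bar>" using p0 by (simp add: abs_mult)
  qed
  finally show ?thesis .
qed

lemma Z_in:
  assumes q: "q \<in> hat_simplex n" and x: "x \<in> X"
  shows "(\<Sum>i=1..n. b i * posterior n f q i x) \<in> {-(\<Sum>i=1..n. \<bar>b i\<bar>)..(\<Sum>i=1..n. \<bar>b i\<bar>)}"
proof -
  have a: "\<bar>\<Sum>i=1..n. b i * posterior n f q i x\<bar> \<le> (\<Sum>i=1..n. \<bar>b i\<bar>)" by (rule Z_bound[OF q x])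
  show ?thesis using abs_le_D1[OF a] abs_le_D2[OF a] by simp
qed

lemma E_int:
  assumes q: "q \<in> hat_simplex n" and \<phi>: "continuous_on UNIV \<phi>"
  shows "integrable M (\<lambda>x. \<phi> (\<Sum>i=1..n. b i * posterior n f q i x) * mix n f q x)"
proof -
  define B where "B = (\<Sum>i=1..n. \<bar>b i\<bar>)"
  have "compact (\<phi> ` {-B..B})"
    by (rule compact_continuous_image[OF continuous_on_subset[OF \<phi>]]) auto
  then have "bounded (\<phi> ` {-B..B})" by (rule compact_imp_bounded)
  then obtain K where K0: "\<forall>y\<in>\<phi> ` {-B..B}. norm y \<le> K" unfolding bounded_iff by blast
  have K: "\<bar>\<phi> z\<bar> \<le> K" if "z \<in> {-B..B}" for z using K0 that by simp
  show ?thesis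
  proof (rule int_bdd[OF _ _ mix_int])
    show "(\<lambda>x. \<phi> (\<Sum>i=1..n. b i * posterior n f q i x)) \<in> borel_measurable M"
      by (rule borel_measurable_continuous_on[OF \<phi> Z_meas])
    fix x assume x: "x \<in> X"
    show "\<bar>\<phi> (\<Sum>i=1..n. b i * posterior n f q i x)\<bar> \<le> K"
      using Z_in[OF q x, of b] unfolding B_def[symmetric] by (rule K)
  qed
qed

lemma E_approx:
  assumes q: "q \<in> hat_simplex n" and c1: "continuous_on UNIV \<phi>1" and c2: "continuous_on UNIV \<phi>2"
    and close: "\<And>z. z \<in> {-(\<Sum>i=1..n. \<bar>b i\<bar>)..(\<Sum>i=1..n. \<bar>b i\<bar>)} \<Longrightarrow> \<bar>\<phi>1 z - \<phi>2 z\<bar> \<le> \<epsilon>"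
  shows "\<bar>expect_post n X f q (\<lambda>p. \<phi>1 (\<Sum>i=1..n. b i * p i)) - expect_post n X f q (\<lambda>p. \<phi>2 (\<Sum>i=1..n. b i * p i))\<bar> \<le> \<epsilon>"
proof -
  define Z where "Z = (\<lambda>x. \<Sum>i=1..n. b i * posterior n f q i x)"
  define m where "m = mix n f q"
  define D where "D = (\<lambda>x. \<phi>1 (Z x) * m x - \<phi>2 (Z x) * m x)"
  have i1: "integrable M (\<lambda>x. \<phi>1 (Z x) * m x)" unfolding Z_def m_def by (rule E_int[OF q c1])
  have i2: "integrable M (\<lambda>x. \<phi>2 (Z x) * m x)" unfolding Z_def m_def by (rule E_int[OF q c2])
  have e1: "expect_post n X f q (\<lambda>p. \<phi>1 (\<Sum>i=1..n. b i * p i)) = integral\<^sup>L M (\<lambda>x. \<phi>1 (Z x) * m x)"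
    unfolding expect_post_def Z_def m_def by simp
  have e2: "expect_post n X f q (\<lambda>p. \<phi>2 (\<Sum>i=1..n. b i * p i)) = integral\<^sup>L M (\<lambda>x. \<phi>2 (Z x) * m x)"
    unfolding expect_post_def Z_def m_def by simp
  have iD: "integrable M D" unfolding D_def by (rule Bochner_Integration.integrable_diff[OF i1 i2])
  have dif: "integral\<^sup>L M (\<lambda>x. \<phi>1 (Z x) * m x) - integral\<^sup>L M (\<lambda>x. \<phi>2 (Z x) * m x) = integral\<^sup>L M D"
    unfolding D_def by (rule Bochner_Integration.integral_diff[OF i1 i2, symmetric])
  have im: "integrable M (\<lambda>x. \<epsilon> * m x)" unfolding m_def using mix_int by (rule integrable_mult_right)
  have bnd: "\<bar>D x\<bar> \<le> \<epsilon> * m x" if "x \<in> space M" for x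
  proof -
    have x: "x \<in> X" using that by simp
    have m0: "0 \<le> m x" unfolding m_def by (rule mix_nn[OF q x])
    have "Z x \<in> {-(\<Sum>i=1..n. \<bar>b i\<bar>)..(\<Sum>i=1..n. \<bar>b i\<bar>)}" unfolding Z_def by (rule Z_in[OF q x])
    then have c: "\<bar>\<phi>1 (Z x) - \<phi>2 (Z x)\<bar> \<le> \<epsilon>" by (rule close)
    have "D x = (\<phi>1 (Z x) - \<phi>2 (Z x)) * m x" unfolding D_def by (rule left_diff_distrib[symmetric])
    then have "\<bar>D x\<bar> = \<bar>\<phi>1 (Z x) - \<phi>2 (Z x)\<bar> * m x" using m0 by (simp add: abs_mult)
    also have "\<dots> \<le> \<epsilon> * m x" using c m0 by (rule mult_right_mono)
    finally show ?thesis .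
  qed
  have "\<bar>integral\<^sup>L M D\<bar> \<le> integral\<^sup>L M (\<lambda>x. \<epsilon> * m x)"
    by (rule integral_abs_bound_integral[OF iD im bnd])
  moreover have "integral\<^sup>L M m = 1" using E_one[OF q] unfolding m_def .
  then have "integral\<^sup>L M (\<lambda>x. \<epsilon> * m x) = \<epsilon>" by simp
  ultimately have "\<bar>integral\<^sup>L M D\<bar> \<le> \<epsilon>" by linarith
  then show ?thesis unfolding e1 e2 dif .
qed

lemma E_L:
  fixes N :: nat
  assumes q: "q \<in> hat_simplex n"
  shows "expect_post n X f q (\<lambda>p. \<alpha> + \<beta> * (\<Sum>i=1..n. b i * p i) + (\<Sum>k<N. cs k * max 0 ((\<Sum>i=1..n. b i * p i) - zs k)))
     = \<alpha> + \<beta> * (\<Sum>i=1..n. b i * full_prior n q i) + (\<Sum>k<N. cs k * H q (\<lambda>i. if i = 0 then - zs k else b i - zs k))"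
proof -
  define g where "g = (\<lambda>k::nat. \<lambda>i::nat. if i = 0 then - zs k else b i - zs k)"
  define g0 where "g0 = (\<lambda>i::nat. if i = 0 then 0 else b i)"
  have "expect_post n X f q (\<lambda>p. \<alpha> + \<beta> * (\<Sum>i=1..n. b i * p i) + (\<Sum>k<N. cs k * max 0 ((\<Sum>i=1..n. b i * p i) - zs k)))
     = integral\<^sup>L M (\<lambda>x. \<alpha> * mix n f q x + \<beta> * A q g0 x + (\<Sum>k<N. cs k * max 0 (A q (g k) x)))"
    unfolding expect_post_def
  proof (rule Bochner_Integration.integral_cong[OF refl])
    fix x assume "x \<in> space M"
    then have x: "x \<in> X" by simp
    have h: "max 0 ((\<Sum>i=1..n. b i * posterior n f q i x) - zs k) * mix n f q x = max 0 (A q (g k) x)" for k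
    proof -
      have "(\<Sum>i=1..n. b i * posterior n f q i x) - zs k = g k 0 + (\<Sum>i=1..n. (g k i - g k 0) * posterior n f q i x)"
        by (auto simp: g_def intro!: sum.cong)
      then show ?thesis using hinge_pt[OF q x, of "g k"] by (simp add: g_def)
    qed
    show "(\<alpha> + \<beta> * (\<Sum>i=1..n. b i * posterior n f q i x) + (\<Sum>k<N. cs k * max 0 ((\<Sum>i=1..n. b i * posterior n f q i x) - zs k))) * mix n f q x
       = \<alpha> * mix n f q x + \<beta> * A q g0 x + (\<Sum>k<N. cs k * max 0 (A q (g k) x))"
    proof -
      let ?Z = "\<Sum>i=1..n. b i * posterior n f q i x"
      have "(\<alpha> + \<beta> * ?Z + (\<Sum>k<N. cs k * max 0 (?Z - zs k))) * mix n f q x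
          = \<alpha> * mix n f q x + \<beta> * (?Z * mix n f q x) + (\<Sum>k<N. cs k * (max 0 (?Z - zs k) * mix n f q x))"
        by (simp add: distrib_right sum_distrib_right mult.assoc)
      also have "\<dots> = \<alpha> * mix n f q x + \<beta> * A q g0 x + (\<Sum>k<N. cs k * max 0 (A q (g k) x))"
        by (simp only: lin_pt[OF q x, of b] h g0_def)
      finally show ?thesis .
    qed
  qed
  also have "\<dots> = \<alpha> * integral\<^sup>L M (mix n f q) + \<beta> * integral\<^sup>L M (A q g0) + (\<Sum>k<N. cs k * H q (g k))"
  proof -
    have "integral\<^sup>L M (\<lambda>x. \<Sum>k<N. cs k * max 0 (A q (g k) x)) = (\<Sum>k<N. cs k * H q (g k))"
      unfolding H_def by (subst Bochner_Integration.integral_sum) (auto intro: Hint)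
    moreover have "integrable M (\<lambda>x. \<Sum>k<N. cs k * max 0 (A q (g k) x))"
      by (intro Bochner_Integration.integrable_sum integrable_mult_right Hint)
    ultimately show ?thesis using mix_int A_int by simp
  qed
  also have "\<dots> = \<alpha> + \<beta> * (\<Sum>i=1..n. b i * full_prior n q i) + (\<Sum>k<N. cs k * H q (g k))"
    using E_one[OF q] unfolding A_integral by (simp add: sum.atLeast_Suc_atMost g0_def)
  finally show ?thesis unfolding g_def .
qed

lemma V_comb: assumes "is_strategy X t1" "is_strategy X t2" "i \<le> n"
  shows "V (\<lambda>x. (1 - e) * t1 x + e * t2 x) i = (1 - e) * V t1 i + e * V t2 i"
proof -
  have "V (\<lambda>x. (1 - e) * t1 x + e * t2 x) i = integral\<^sup>L M (\<lambda>x. (1 - e) * (t1 x * f i x) + e * (t2 x * f i x))"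
    unfolding V_def by (rule Bochner_Integration.integral_cong) (auto simp: algebra_simps)
  also have "\<dots> = (1 - e) * V t1 i + e * V t2 i"
    unfolding V_def using int_tf[OF assms(1,3)] int_tf[OF assms(2,3)] by simp
  finally show ?thesis .
qed

lemma comb_strat: assumes "is_strategy X t1" "is_strategy X t2" "0 \<le> e" "e \<le> 1"
  shows "is_strategy X (\<lambda>x. (1 - e) * t1 x + e * t2 x)"
proof -
  have m: "(\<lambda>x. (1 - e) * t1 x + e * t2 x) \<in> borel_measurable borel" using assms by (auto simp: is_strategy_def)
  have "0 \<le> (1 - e) * t1 x + e * t2 x \<and> (1 - e) * t1 x + e * t2 x \<le> 1" if x: "x \<in> X" for x
  proof -
    have a: "0 \<le> t1 x" "t1 x \<le> 1" "0 \<le> t2 x" "t2 x \<le> 1" using assms x by (auto simp: is_strategy_def)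
    have "(1 - e) * t1 x \<le> (1 - e) * 1" using a assms by (intro mult_left_mono) auto
    moreover have "e * t2 x \<le> e * 1" using a assms by (intro mult_left_mono) auto
    moreover have "0 \<le> (1 - e) * t1 x" "0 \<le> e * t2 x" using a assms by auto
    ultimately show ?thesis by simp
  qed
  then show ?thesis using m by (auto simp: is_strategy_def)
qed

end


lemma quad_bound: "(max 0 (a + b::real))^2 \<le> (max 0 a)^2 + 2 * max 0 a * b + b^2"
proof (cases "a + b \<le> 0")
  case True
  then have l: "(max 0 (a + b))^2 = 0" by simp
  show ?thesis
  proof (cases "a \<le> 0")
    case True then show ?thesis using l by simp
  next
    case False
    then have "(max 0 a)^2 + 2 * max 0 a * b + b^2 = (a + b)^2" by (simp add: power2_eq_square algebra_simps)
    then show ?thesis using l by simp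
  qed
next
  case False
  show ?thesis
  proof (cases "a \<le> 0")
    case True
    have "0 < a + b" "a + b \<le> b" using False True by auto
    then have "(a + b)^2 \<le> b^2" by (intro power_mono) auto
    then show ?thesis using False True by simp
  next
    case a: False
    then show ?thesis using False by (simp add: power2_eq_square algebra_simps)
  qed
qed

lemma sqpos_mid: "(max 0 ((a + a') / 2::real))^2 \<le> ((max 0 a)^2 + (max 0 a')^2) / 2"
proof -
  have "max 0 ((a + a') / 2) \<le> (max 0 a + max 0 a') / 2" by (simp add: max_def)
  then have "(max 0 ((a + a') / 2))^2 \<le> ((max 0 a + max 0 a') / 2)^2" by (intro power_mono) auto
  also have "\<dots> \<le> ((max 0 a)^2 + (max 0 a')^2) / 2"
  proof -
    have "0 \<le> (max 0 a - max 0 a')^2" by simp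
    then show ?thesis by (simp add: power2_eq_square field_simps)
  qed
  finally show ?thesis .
qed

lemma hinge_convex: "convex_on UNIV (\<lambda>z::real. max 0 (c + z))"
proof (rule convex_onI[OF _ convex_UNIV])
  fix x y t :: real assume "0 < t" "t < 1"
  then have t: "0 \<le> t \<and> t \<le> 1" by simp
  have "c + ((1 - t) *\<^sub>R x + t *\<^sub>R y) = (1 - t) * (c + x) + t * (c + y)" by (simp add: algebra_simps)
  moreover have "(1 - t) * (c + x) \<le> (1 - t) * max 0 (c + x)" using t by (intro mult_left_mono) auto
  moreover have "t * (c + y) \<le> t * max 0 (c + y)" using t by (intro mult_left_mono) auto
  moreover have "0 \<le> (1 - t) * max 0 (c + x)" "0 \<le> t * max 0 (c + y)" using t by auto
  ultimately show "max 0 (c + ((1 - t) *\<^sub>R x + t *\<^sub>R y)) \<le> (1 - t) * max 0 (c + x) + t * max 0 (c + y)"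
    by simp
qed

lemma eps_le: assumes "\<And>e::real. 0 < e \<Longrightarrow> b - 2 * e \<le> a" shows "b \<le> a"
proof (rule ccontr)
  assume "\<not> b \<le> a"
  then have "0 < (b - a) / 4" by simp
  from assms[OF this] show False using \<open>\<not> b \<le> a\<close> by (simp add: field_simps)
qed

lemma unif_simplex: "(\<lambda>i. 1 / real (Suc n)) \<in> hat_simplex n"
  unfolding hat_simplex_def by (auto simp: field_simps)

lemma unif_prior: "i \<le> n \<Longrightarrow> full_prior n (\<lambda>i. 1 / real (Suc n)) i = 1 / real (Suc n)"
  unfolding full_prior_def by (auto simp: field_simps)

definition Hc :: "nat \<Rightarrow> real set \<Rightarrow> (nat \<Rightarrow> real \<Rightarrow> real) \<Rightarrow> real set \<Rightarrow> (nat \<Rightarrow> real \<Rightarrow> real) \<Rightarrow> bool" where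
  "Hc n X f Y g \<longleftrightarrow> (\<forall>q\<in>hat_simplex n. \<forall>\<gamma>. exper.H n Y g q \<gamma> \<le> exper.H n X f q \<gamma>)"

lemma ii_iff:
  assumes Ef: "is_experiment n X f" and Eg: "is_experiment n Y g"
  shows "(\<forall>u :: bool \<Rightarrow> nat \<Rightarrow> real. \<forall>q\<in>hat_simplex n. Vbar n X f u q \<ge> Vbar n Y g u q) \<longleftrightarrow> Hc n X f Y g"
proof -
  interpret F: exper n X f by (rule exper.intro[OF Ef])
  interpret G: exper n Y g by (rule exper.intro[OF Eg])
  show ?thesis
  proof
    assume A: "\<forall>u :: bool \<Rightarrow> nat \<Rightarrow> real. \<forall>q\<in>hat_simplex n. Vbar n X f u q \<ge> Vbar n Y g u q"
    show "Hc n X f Y g" unfolding Hc_def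
    proof (intro ballI allI)
      fix q \<gamma> assume q: "q \<in> hat_simplex n"
      define u where "u = (\<lambda>a::bool. if a then \<gamma> else (\<lambda>_::nat. 0::real))"
      have "Vbar n X f u q \<ge> Vbar n Y g u q" using bspec[OF spec[OF A, of u] q] .
      moreover have "Vbar n X f u q = F.H q \<gamma>" using F.Vbar_eq[OF q, of u] by (simp add: u_def)
      moreover have "Vbar n Y g u q = G.H q \<gamma>" using G.Vbar_eq[OF q, of u] by (simp add: u_def)
      ultimately show "G.H q \<gamma> \<le> F.H q \<gamma>" by simp
    qed
  next
    assume H: "Hc n X f Y g"
    show "\<forall>u :: bool \<Rightarrow> nat \<Rightarrow> real. \<forall>q\<in>hat_simplex n. Vbar n X f u q \<ge> Vbar n Y g u q"
    proof (intro ballI allI)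
      fix u :: "bool \<Rightarrow> nat \<Rightarrow> real" and q assume q: "q \<in> hat_simplex n"
      have "G.H q (\<lambda>i. u True i - u False i) \<le> F.H q (\<lambda>i. u True i - u False i)"
        using H q unfolding Hc_def by simp
      then show "Vbar n X f u q \<ge> Vbar n Y g u q"
        unfolding F.Vbar_eq[OF q] G.Vbar_eq[OF q] by simp
    qed
  qed
qed

lemma i_iff:
  assumes Ef: "is_experiment n X f" and Eg: "is_experiment n Y g"
  shows "lb_dominates n X f Y g \<longleftrightarrow> Hc n X f Y g"
proof -
  interpret F: exper n X f by (rule exper.intro[OF Ef])
  interpret G: exper n Y g by (rule exper.intro[OF Eg])
  show ?thesis
  proof
    assume L: "lb_dominates n X f Y g"
    show "Hc n X f Y g" unfolding Hc_def
    proof (intro ballI allI)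
      fix q \<gamma> assume q: "q \<in> hat_simplex n"
      have L': "\<And>b C. convex_on UNIV C \<Longrightarrow> expect_post n X f q (\<lambda>p. C (\<Sum>i=1..n. b i * p i))
          \<ge> expect_post n Y g q (\<lambda>p. C (\<Sum>i=1..n. b i * p i))"
        using L q unfolding lb_dominates_def by blast
      have "expect_post n X f q (\<lambda>p. (\<lambda>z. max 0 (\<gamma> 0 + z)) (\<Sum>i=1..n. (\<gamma> i - \<gamma> 0) * p i))
          \<ge> expect_post n Y g q (\<lambda>p. (\<lambda>z. max 0 (\<gamma> 0 + z)) (\<Sum>i=1..n. (\<gamma> i - \<gamma> 0) * p i))"
        by (rule L'[OF hinge_convex[of "\<gamma> 0"]])
      then show "G.H q \<gamma> \<le> F.H q \<gamma>" using F.E_hinge[OF q, of \<gamma>] G.E_hinge[OF q, of \<gamma>] by simp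
    qed
  next
    assume H: "Hc n X f Y g"
    show "lb_dominates n X f Y g" unfolding lb_dominates_def
    proof (intro ballI allI impI)
      fix q and b :: "nat \<Rightarrow> real" and C :: "real \<Rightarrow> real" assume q: "q \<in> hat_simplex n" and cv: "convex_on UNIV C"
      define B where "B = (\<Sum>i=1..n. \<bar>b i\<bar>)"
      have B0: "0 \<le> B" unfolding B_def by (simp add: sum_nonneg)
      have cC: "continuous_on UNIV C" by (rule convex_on_continuous[OF open_UNIV cv])
      show "expect_post n X f q (\<lambda>p. C (\<Sum>i=1..n. b i * p i)) \<ge> expect_post n Y g q (\<lambda>p. C (\<Sum>i=1..n. b i * p i))"
      proof (rule eps_le)
        fix e :: real assume e: "0 < e"
        have "- B - 1 < B + 1" using B0 by simp
        from convex_approx[OF cv e this] obtain \<alpha> \<beta> and N :: nat and zs cs where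
          cs: "\<forall>k. 0 \<le> cs k" and
          ap: "\<forall>z\<in>{- B - 1..B + 1}. \<bar>C z - (\<alpha> + \<beta> * z + (\<Sum>k<N. cs k * max 0 (z - zs k)))\<bar> \<le> e"
          by blast
        define L where "L = (\<lambda>z. \<alpha> + \<beta> * z + (\<Sum>k<N. cs k * max 0 (z - zs k)))"
        have cL: "continuous_on UNIV L" unfolding L_def by (intro continuous_intros)
        have close: "\<bar>C z - L z\<bar> \<le> e" if "z \<in> {-(\<Sum>i=1..n. \<bar>b i\<bar>)..(\<Sum>i=1..n. \<bar>b i\<bar>)}" for z
          using ap that unfolding L_def B_def[symmetric] by auto
        have af: "\<bar>expect_post n X f q (\<lambda>p. C (\<Sum>i=1..n. b i * p i)) - expect_post n X f q (\<lambda>p. L (\<Sum>i=1..n. b i * p i))\<bar> \<le> e"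
          by (rule F.E_approx[OF q cC cL close])
        have ag: "\<bar>expect_post n Y g q (\<lambda>p. C (\<Sum>i=1..n. b i * p i)) - expect_post n Y g q (\<lambda>p. L (\<Sum>i=1..n. b i * p i))\<bar> \<le> e"
          by (rule G.E_approx[OF q cC cL close])
        have "expect_post n Y g q (\<lambda>p. L (\<Sum>i=1..n. b i * p i)) \<le> expect_post n X f q (\<lambda>p. L (\<Sum>i=1..n. b i * p i))"
        proof -
          have "(\<Sum>k<N. cs k * G.H q (\<lambda>i. if i = 0 then - zs k else b i - zs k))
              \<le> (\<Sum>k<N. cs k * F.H q (\<lambda>i. if i = 0 then - zs k else b i - zs k))"
            using H q cs unfolding Hc_def by (intro sum_mono mult_left_mono) auto
          then show ?thesis unfolding L_def F.E_L[OF q] G.E_L[OF q] by simp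
        qed
        then show "expect_post n Y g q (\<lambda>p. C (\<Sum>i=1..n. b i * p i)) - 2 * e \<le> expect_post n X f q (\<lambda>p. C (\<Sum>i=1..n. b i * p i))"
          using af ag by linarith
      qed
    qed
  qed
qed

lemma iii_from_Hc:
  assumes Ef: "is_experiment n X f" and Eg: "is_experiment n Y g" and H: "Hc n X f Y g"
    and s: "is_strategy Y s"
  shows "\<exists>t. is_strategy X t \<and> (\<forall>i\<le>n. strat_payoff X f u t i \<ge> strat_payoff Y g u s i)"
proof -
  interpret F: exper n X f by (rule exper.intro[OF Ef])
  interpret G: exper n Y g by (rule exper.intro[OF Eg])
  define d where "d i = u True i - u False i" for i
  define w where "w i = G.V s i" for i
  define \<phi> where "\<phi> v = (\<Sum>i=0..n. (max 0 (d i * (w i - v i)))^2)" for v :: "nat \<Rightarrow> real"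
  have nn: "0 \<le> \<phi> v" for v unfolding \<phi>_def by (intro sum_nonneg) auto
  have cong: "\<phi> v = \<phi> v'" if "\<And>i. i \<le> n \<Longrightarrow> v i = v' i" for v v'
    unfolding \<phi>_def using that by (intro sum.cong) auto
  have mid: "\<phi> (\<lambda>i. (v i + v' i) / 2) \<le> max (\<phi> v) (\<phi> v')" for v v'
  proof -
    have "\<phi> (\<lambda>i. (v i + v' i) / 2) \<le> (\<Sum>i=0..n. ((max 0 (d i * (w i - v i)))^2 + (max 0 (d i * (w i - v' i)))^2) / 2)"
      unfolding \<phi>_def
    proof (rule sum_mono)
      fix i
      have "d i * (w i - (v i + v' i) / 2) = (d i * (w i - v i) + d i * (w i - v' i)) / 2"
        by (simp add: field_simps)
      then show "(max 0 (d i * (w i - (v i + v' i) / 2)))^2 \<le> ((max 0 (d i * (w i - v i)))^2 + (max 0 (d i * (w i - v' i)))^2) / 2"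
        by (simp only:) (rule sqpos_mid)
    qed
    also have "\<dots> = (\<phi> v + \<phi> v') / 2" unfolding \<phi>_def sum_divide_distrib[symmetric] sum.distrib ..
    also have "\<dots> \<le> max (\<phi> v) (\<phi> v')" by (simp add: max_def)
    finally show ?thesis .
  qed
  have cont: "(\<lambda>k. \<phi> (vs k)) \<longlonglongrightarrow> \<phi> v" if "\<And>i. i \<le> n \<Longrightarrow> (\<lambda>k. vs k i) \<longlonglongrightarrow> v i" for vs v
    unfolding \<phi>_def
  proof (rule tendsto_sum)
    fix i assume "i \<in> {0..n}"
    then have "(\<lambda>k. vs k i) \<longlonglongrightarrow> v i" using that by simp
    then show "(\<lambda>k. (max 0 (d i * (w i - vs k i)))^2) \<longlonglongrightarrow> (max 0 (d i * (w i - v i)))^2"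
      by (intro tendsto_intros)
  qed
  obtain t where t: "is_strategy X t" and tmin: "\<And>t'. is_strategy X t' \<Longrightarrow> \<phi> (F.V t) \<le> \<phi> (F.V t')"
    using F.min_exists[of \<phi>, OF nn cong mid cont] by blast
  define vs where "vs i = F.V t i" for i
  define e where "e i = max 0 (d i * (w i - vs i))" for i
  define lam where "lam i = d i * e i" for i
  have first: "(\<Sum>i=0..n. lam i * (F.V t' i - vs i)) \<le> 0" if t': "is_strategy X t'" for t'
  proof (rule ccontr)
    define D where "D i = F.V t' i - vs i" for i
    define \<Lambda> where "\<Lambda> = (\<Sum>i=0..n. lam i * D i)"
    define Q where "Q = (\<Sum>i=0..n. (d i * D i)^2)"
    assume "\<not> (\<Sum>i=0..n. lam i * (F.V t' i - vs i)) \<le> 0"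
    then have \<Lambda>pos: "0 < \<Lambda>" unfolding \<Lambda>_def D_def by simp
    have Q0: "0 \<le> Q" unfolding Q_def by (intro sum_nonneg) auto
    define \<epsilon> where "\<epsilon> = min 1 (\<Lambda> / (Q + 1))"
    have \<epsilon>0: "0 < \<epsilon>" unfolding \<epsilon>_def using \<Lambda>pos Q0 by simp
    have \<epsilon>1: "\<epsilon> \<le> 1" unfolding \<epsilon>_def by simp
    define t\<epsilon> where "t\<epsilon> = (\<lambda>x. (1 - \<epsilon>) * t x + \<epsilon> * t' x)"
    have ts: "is_strategy X t\<epsilon>" unfolding t\<epsilon>_def using F.comb_strat[OF t t'] \<epsilon>0 \<epsilon>1 by simp
    have Vt: "F.V t\<epsilon> i = vs i + \<epsilon> * D i" if "i \<le> n" for i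
      unfolding t\<epsilon>_def F.V_comb[OF t t' that] vs_def D_def by (simp add: algebra_simps)
    have "\<phi> (F.V t) \<le> \<phi> (F.V t\<epsilon>)" by (rule tmin[OF ts])
    also have "\<phi> (F.V t\<epsilon>) = (\<Sum>i=0..n. (max 0 (d i * (w i - vs i) + (- \<epsilon> * d i * D i)))^2)"
      unfolding \<phi>_def by (intro sum.cong) (auto simp: Vt algebra_simps)
    also have "\<dots> \<le> (\<Sum>i=0..n. (e i)^2 + 2 * e i * (- \<epsilon> * d i * D i) + (- \<epsilon> * d i * D i)^2)"
      unfolding e_def by (intro sum_mono quad_bound)
    also have "\<dots> = \<phi> (F.V t) - 2 * \<epsilon> * \<Lambda> + \<epsilon>^2 * Q"
      unfolding \<phi>_def \<Lambda>_def Q_def lam_def e_def vs_def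
      by (simp add: sum.distrib sum_subtractf sum_distrib_left power2_eq_square algebra_simps)
    finally have "2 * \<epsilon> * \<Lambda> \<le> \<epsilon>^2 * Q" by simp
    then have "2 * \<Lambda> \<le> \<epsilon> * Q" using \<epsilon>0 by (simp add: power2_eq_square)
    moreover have "\<epsilon> * Q \<le> \<Lambda> / (Q + 1) * Q" unfolding \<epsilon>_def using Q0 by (intro mult_right_mono) auto
    moreover have "\<Lambda> / (Q + 1) * Q < \<Lambda>"
    proof -
      have "\<Lambda> * Q < \<Lambda> * (Q + 1)" using \<Lambda>pos by simp
      then show ?thesis using Q0 by (simp add: field_simps)
    qed
    ultimately show False using \<Lambda>pos by simp
  qed
  define qu where "qu = (\<lambda>i::nat. 1 / real (Suc n))"
  have qu: "qu \<in> hat_simplex n" unfolding qu_def by (rule unif_simplex)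
  define \<gamma> where "\<gamma> i = real (Suc n) * lam i" for i
  have gp: "\<gamma> i * full_prior n qu i = lam i" if "i \<le> n" for i
    unfolding \<gamma>_def qu_def using unif_prior[OF that] by simp
  obtain t' where t': "is_strategy X t'" and t'eq: "integral\<^sup>L F.M (\<lambda>x. t' x * F.A qu \<gamma> x) = F.H qu \<gamma>"
    using F.strat_pos[OF F.A_int, of qu \<gamma>] unfolding F.H_def by blast
  have "F.H qu \<gamma> = (\<Sum>i=0..n. lam i * F.V t' i)"
    unfolding t'eq[symmetric] F.tA[OF t'] by (intro sum.cong) (auto simp: gp)
  also have "\<dots> \<le> (\<Sum>i=0..n. lam i * vs i)"
    using first[OF t'] by (simp add: algebra_simps sum_subtractf)
  finally have Fb: "F.H qu \<gamma> \<le> (\<Sum>i=0..n. lam i * vs i)" .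
  have "(\<Sum>i=0..n. lam i * w i) = integral\<^sup>L G.M (\<lambda>x. s x * G.A qu \<gamma> x)"
    unfolding G.tA[OF s] w_def by (intro sum.cong) (auto simp: gp)
  also have "\<dots> \<le> G.H qu \<gamma>" unfolding G.H_def by (rule G.strat_le_pos[OF s G.A_int])
  also have "\<dots> \<le> F.H qu \<gamma>" using H qu unfolding Hc_def by simp
  finally have "(\<Sum>i=0..n. lam i * w i) \<le> (\<Sum>i=0..n. lam i * vs i)" using Fb by simp
  then have "(\<Sum>i=0..n. lam i * (w i - vs i)) \<le> 0" by (simp add: algebra_simps sum_subtractf)
  moreover have "lam i * (w i - vs i) = (e i)^2" for i
    unfolding lam_def e_def by (simp add: max_def power2_eq_square algebra_simps)
  ultimately have "(\<Sum>i=0..n. (e i)^2) \<le> 0" by simp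
  then have "(\<Sum>i=0..n. (e i)^2) = 0" by (simp add: antisym sum_nonneg)
  then have e0: "\<forall>i\<in>{0..n}. (e i)^2 = 0" by (subst sum_nonneg_eq_0_iff[symmetric]) auto
  have "strat_payoff X f u t i \<ge> strat_payoff Y g u s i" if i: "i \<le> n" for i
  proof -
    have "e i = 0" using e0 i by simp
    moreover have "d i * (w i - vs i) \<le> e i" unfolding e_def by simp
    ultimately have "d i * (w i - vs i) \<le> 0" by simp
    then have "d i * w i \<le> d i * vs i" by (simp add: algebra_simps)
    then show ?thesis unfolding F.payoff_eq[OF t i] G.payoff_eq[OF s i] d_def w_def vs_def by simp
  qed
  then show ?thesis using t by blast
qed

lemma Hc_from_iii:
  assumes Ef: "is_experiment n X f" and Eg: "is_experiment n Y g"
    and iii: "\<forall>(u :: bool \<Rightarrow> nat \<Rightarrow> real) (s :: real \<Rightarrow> real). is_strategy Y s \<longrightarrow>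
               (\<exists>t. is_strategy X t \<and> (\<forall>i\<le>n. strat_payoff X f u t i \<ge> strat_payoff Y g u s i))"
  shows "Hc n X f Y g"
  unfolding Hc_def
proof (intro ballI allI)
  interpret F: exper n X f by (rule exper.intro[OF Ef])
  interpret G: exper n Y g by (rule exper.intro[OF Eg])
  fix q \<gamma> assume q: "q \<in> hat_simplex n"
  define u where "u = (\<lambda>a::bool. if a then \<gamma> else (\<lambda>_::nat. 0::real))"
  obtain s where s: "is_strategy Y s" and seq: "integral\<^sup>L G.M (\<lambda>x. s x * G.A q \<gamma> x) = G.H q \<gamma>"
    using G.strat_pos[OF G.A_int, of q \<gamma>] unfolding G.H_def by blast
  obtain t where t: "is_strategy X t" and tp: "\<forall>i\<le>n. strat_payoff X f u t i \<ge> strat_payoff Y g u s i"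
    using iii s by blast
  have "G.H q \<gamma> = (\<Sum>i=0..n. \<gamma> i * full_prior n q i * G.V s i)" unfolding seq[symmetric] G.tA[OF s] ..
  also have "\<dots> \<le> (\<Sum>i=0..n. \<gamma> i * full_prior n q i * F.V t i)"
  proof (rule sum_mono)
    fix i assume "i \<in> {0..n}"
    then have i: "i \<le> n" by simp
    have "strat_payoff Y g u s i \<le> strat_payoff X f u t i" using tp i by blast
    then have "\<gamma> i * G.V s i \<le> \<gamma> i * F.V t i"
      unfolding F.payoff_eq[OF t i] G.payoff_eq[OF s i] by (simp add: u_def)
    then have "full_prior n q i * (\<gamma> i * G.V s i) \<le> full_prior n q i * (\<gamma> i * F.V t i)"
      using prior_nonneg[OF q i] by (rule mult_left_mono)
    then show "\<gamma> i * full_prior n q i * G.V s i \<le> \<gamma> i * full_prior n q i * F.V t i"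
      by (simp add: algebra_simps)
  qed
  also have "\<dots> = integral\<^sup>L F.M (\<lambda>x. t x * F.A q \<gamma> x)" unfolding F.tA[OF t] ..
  also have "\<dots> \<le> F.H q \<gamma>" unfolding F.H_def by (rule F.strat_le_pos[OF t F.A_int])
  finally show "G.H q \<gamma> \<le> F.H q \<gamma>" .
qed

theorem lemma2:
  fixes n :: nat and X Y :: "real set" and f g :: "nat \<Rightarrow> real \<Rightarrow> real"
  assumes "is_experiment n X f" and "is_experiment n Y g"
  shows "(lb_dominates n X f Y g \<longleftrightarrow>
            (\<forall>u :: bool \<Rightarrow> nat \<Rightarrow> real. \<forall>q\<in>hat_simplex n. Vbar n X f u q \<ge> Vbar n Y g u q))
       \<and> (lb_dominates n X f Y g \<longleftrightarrow>
            (\<forall>(u :: bool \<Rightarrow> nat \<Rightarrow> real) (s :: real \<Rightarrow> real). is_strategy Y s \<longrightarrow>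
               (\<exists>t. is_strategy X t \<and> (\<forall>i\<le>n. strat_payoff X f u t i \<ge> strat_payoff Y g u s i))))"
proof -
  have A: "lb_dominates n X f Y g \<longleftrightarrow> Hc n X f Y g" by (rule i_iff[OF assms])
  have B: "(\<forall>u :: bool \<Rightarrow> nat \<Rightarrow> real. \<forall>q\<in>hat_simplex n. Vbar n X f u q \<ge> Vbar n Y g u q) \<longleftrightarrow> Hc n X f Y g"
    by (rule ii_iff[OF assms])
  have C: "(\<forall>(u :: bool \<Rightarrow> nat \<Rightarrow> real) (s :: real \<Rightarrow> real). is_strategy Y s \<longrightarrow>
               (\<exists>t. is_strategy X t \<and> (\<forall>i\<le>n. strat_payoff X f u t i \<ge> strat_payoff Y g u s i)))
         \<longleftrightarrow> Hc n X f Y g"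
  proof
    assume "\<forall>(u :: bool \<Rightarrow> nat \<Rightarrow> real) (s :: real \<Rightarrow> real). is_strategy Y s \<longrightarrow>
               (\<exists>t. is_strategy X t \<and> (\<forall>i\<le>n. strat_payoff X f u t i \<ge> strat_payoff Y g u s i))"
    then show "Hc n X f Y g" by (rule Hc_from_iii[OF assms])
  next
    assume H: "Hc n X f Y g"
    show "\<forall>(u :: bool \<Rightarrow> nat \<Rightarrow> real) (s :: real \<Rightarrow> real). is_strategy Y s \<longrightarrow>
               (\<exists>t. is_strategy X t \<and> (\<forall>i\<le>n. strat_payoff X f u t i \<ge> strat_payoff Y g u s i))"
      using iii_from_Hc[OF assms H] by blast
  qed
  show ?thesis using A B C by blast
qed


end
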